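(* Let $\mathcal{T}_2$ be a connected full subgraph of $\mathcal{T}$ with vertex set $\mathcal{V}_2$ and boundary $\mathcal{B}=\{u\in\mathcal{V}_2:\exists w\notin\mathcal{V}_2\text{ adjacent to }u\}$. (a) Every element of the support of the reduced series $Z(\mathbf{t}_{\mathcal{V}_2})$ can be written in a unique way as $\sum_{v\in\mathcal{V}_2}r_vE_v^*|_{\mathcal{V}_2}$ with $r_v\in\mathbb{Q}_{\ge0}$. (b) Fix $u\in\mathcal{B}$ and let $\delta_{2,u}$ be the number of edges of $\mathcal{T}_2$ adjacent to $u$. If $\delta_{2,u}\ge2$ and $\sum_{v\in\mathcal{V}_2}r_vE_v^*|_{\mathcal{V}_2}$ is in the support of $Z(\mathbf{t}_{\mathcal{V}_2})$, then $$r_u\cdot E_u^*|_u\le\sum_{v\in\mathcal{V}_{1,u}}(\delta_v-2)\,E_v^*|_u,$$ where $\mathcal{V}_{1,u}$ is the vertex set of the full connected subgraph $\mathcal{T}_{1,u}$ of $\mathcal{T}$ consisting of $u$ together with all connected components of $\mathcal{T}\setminus\mathcal{T}_2$ having a vertex adjacent to $u$.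
   Context: $\mathcal{T}$ is a connected plumbing graph which is a tree with genus-$0$ vertices $\mathcal{V}$, valencies $\delta_v$ (in $\mathcal{T}$), negative definite intersection form on $L=\mathbb{Z}\langle E_v\rangle$; $E_v^*\in L\otimes\mathbb{Q}$ is defined by $(E_v^*,E_w)=-\delta_{vw}$. For $x=\sum_w x_wE_w$, $x|_u=x_u$ is its $E_u$-coefficient and $x|_{\mathcal{V}_2}=\sum_{w\in\mathcal{V}_2}x_wE_w$. $Z(\mathbf{t})$ is the Taylor expansion at the origin of $\prod_{v}(1-\mathbf{t}^{E_v^*})^{\delta_v-2}$ with $\mathbf{t}^{l'}=\prod t_v^{l'_v}$, and $Z(\mathbf{t}_{\mathcal{V}_2})$ is obtained by substituting $t_v=1$ for all $v\notin\mathcal{V}_2$; its support is the set of exponents (vectors $l'|_{\mathcal{V}_2}$) with nonzero coefficient. *)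

theory Defs
  imports Complex_Main
begin

text \<open>A plumbing graph: finite vertex set V, adjacency relation Adj, Euler numbers e.
  All vertices have genus 0.  Vectors of L (x) Q are functions 'v => rat,
  the coefficient of E_w being x w (and x w = 0 for w outside V).\<close>

definition edges_of :: "('v \<Rightarrow> 'v \<Rightarrow> bool) \<Rightarrow> 'v set set" where
  "edges_of Adj = {{a, b} | a b. Adj a b}"

definition connected_in :: "'v set \<Rightarrow> ('v \<Rightarrow> 'v \<Rightarrow> bool) \<Rightarrow> 'v \<Rightarrow> 'v \<Rightarrow> bool" where
  "connected_in S Adj = (\<lambda>a b. a \<in> S \<and> b \<in> S \<and> Adj a b)\<^sup>*\<^sup>*"

definition is_connected :: "'v set \<Rightarrow> ('v \<Rightarrow> 'v \<Rightarrow> bool) \<Rightarrow> bool" where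
  "is_connected S Adj \<longleftrightarrow> S \<noteq> {} \<and> (\<forall>a\<in>S. \<forall>b\<in>S. connected_in S Adj a b)"

definition is_tree :: "'v set \<Rightarrow> ('v \<Rightarrow> 'v \<Rightarrow> bool) \<Rightarrow> bool" where
  "is_tree V Adj \<longleftrightarrow> finite V \<and> (\<forall>a b. Adj a b \<longrightarrow> a \<in> V \<and> b \<in> V)
     \<and> (\<forall>a b. Adj a b \<longrightarrow> Adj b a) \<and> (\<forall>a. \<not> Adj a a)
     \<and> is_connected V Adj \<and> card (edges_of Adj) = card V - 1"

definition valency :: "'v set \<Rightarrow> ('v \<Rightarrow> 'v \<Rightarrow> bool) \<Rightarrow> 'v \<Rightarrow> nat" where
  "valency V Adj v = card {w \<in> V. Adj v w}"

definition inter :: "('v \<Rightarrow> 'v \<Rightarrow> bool) \<Rightarrow> ('v \<Rightarrow> int) \<Rightarrow> 'v \<Rightarrow> 'v \<Rightarrow> rat" where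
  "inter Adj e a b = (if a = b then of_int (e a) else if Adj a b then 1 else 0)"

definition pair_E :: "'v set \<Rightarrow> ('v \<Rightarrow> 'v \<Rightarrow> bool) \<Rightarrow> ('v \<Rightarrow> int) \<Rightarrow> ('v \<Rightarrow> rat) \<Rightarrow> 'v \<Rightarrow> rat" where
  "pair_E V Adj e x w = (\<Sum>a\<in>V. x a * inter Adj e a w)"

definition form :: "'v set \<Rightarrow> ('v \<Rightarrow> 'v \<Rightarrow> bool) \<Rightarrow> ('v \<Rightarrow> int) \<Rightarrow> ('v \<Rightarrow> rat) \<Rightarrow> ('v \<Rightarrow> rat) \<Rightarrow> rat" where
  "form V Adj e x y = (\<Sum>a\<in>V. \<Sum>b\<in>V. x a * y b * inter Adj e a b)"

definition neg_definite :: "'v set \<Rightarrow> ('v \<Rightarrow> 'v \<Rightarrow> bool) \<Rightarrow> ('v \<Rightarrow> int) \<Rightarrow> bool" where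
  "neg_definite V Adj e \<longleftrightarrow> (\<forall>x. (\<exists>v\<in>V. x v \<noteq> 0) \<longrightarrow> form V Adj e x x < 0)"

definition Edual :: "'v set \<Rightarrow> ('v \<Rightarrow> 'v \<Rightarrow> bool) \<Rightarrow> ('v \<Rightarrow> int) \<Rightarrow> 'v \<Rightarrow> ('v \<Rightarrow> rat)" where
  "Edual V Adj e v = (THE x. (\<forall>w\<in>V. pair_E V Adj e x w = (if w = v then -1 else 0))
                           \<and> (\<forall>w. w \<notin> V \<longrightarrow> x w = 0))"

definition restr :: "'v set \<Rightarrow> ('v \<Rightarrow> rat) \<Rightarrow> ('v \<Rightarrow> rat)" where
  "restr S x = (\<lambda>w. if w \<in> S then x w else 0)"

text \<open>Expanding (1 - X)^(delta_v - 2) = sum_k (-1)^k ((delta_v-2) gchoose k) X^k for each factor,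
  the coefficient of t^{l'} in Z(t) is the sum over all k : V -> N with sum_v k_v E_v^* = l'
  of the products of these coefficients.  Substituting t_v = 1 for v not in V2, the coefficient of
  the reduced series Z(t_{V2}) at an exponent m (a vector supported on V2) is the sum over all k
  with (sum_v k_v E_v^*)|_{V2} = m.  (The index set is finite, since the E_v^* have positive entries.)\<close>
definition exps :: "'v set \<Rightarrow> ('v \<Rightarrow> 'v \<Rightarrow> bool) \<Rightarrow> ('v \<Rightarrow> int) \<Rightarrow> 'v set \<Rightarrow> ('v \<Rightarrow> rat) \<Rightarrow> ('v \<Rightarrow> nat) set" where
  "exps V Adj e V2 m = {k. (\<forall>w. w \<notin> V \<longrightarrow> k w = 0) \<and>
      restr V2 (\<lambda>w. \<Sum>v\<in>V. of_nat (k v) * Edual V Adj e v w) = m}"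

definition Zcoeff_factor :: "'v set \<Rightarrow> ('v \<Rightarrow> 'v \<Rightarrow> bool) \<Rightarrow> ('v \<Rightarrow> nat) \<Rightarrow> rat" where
  "Zcoeff_factor V Adj k = (\<Prod>v\<in>V. (-1) ^ k v * ((of_int (int (valency V Adj v) - 2)) gchoose (k v)))"

definition Zred_coeff :: "'v set \<Rightarrow> ('v \<Rightarrow> 'v \<Rightarrow> bool) \<Rightarrow> ('v \<Rightarrow> int) \<Rightarrow> 'v set \<Rightarrow> ('v \<Rightarrow> rat) \<Rightarrow> rat" where
  "Zred_coeff V Adj e V2 m = (\<Sum>k\<in>exps V Adj e V2 m. Zcoeff_factor V Adj k)"

definition Zred_support :: "'v set \<Rightarrow> ('v \<Rightarrow> 'v \<Rightarrow> bool) \<Rightarrow> ('v \<Rightarrow> int) \<Rightarrow> 'v set \<Rightarrow> ('v \<Rightarrow> rat) set" where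
  "Zred_support V Adj e V2 = {m. Zred_coeff V Adj e V2 m \<noteq> 0}"

definition dual_comb :: "'v set \<Rightarrow> ('v \<Rightarrow> 'v \<Rightarrow> bool) \<Rightarrow> ('v \<Rightarrow> int) \<Rightarrow> 'v set \<Rightarrow> ('v \<Rightarrow> rat) \<Rightarrow> ('v \<Rightarrow> rat)" where
  "dual_comb V Adj e V2 r = restr V2 (\<lambda>w. \<Sum>v\<in>V2. r v * Edual V Adj e v w)"

definition boundary :: "'v set \<Rightarrow> ('v \<Rightarrow> 'v \<Rightarrow> bool) \<Rightarrow> 'v set \<Rightarrow> 'v set" where
  "boundary V Adj V2 = {u \<in> V2. \<exists>w\<in>V - V2. Adj u w}"

definition V1 :: "'v set \<Rightarrow> ('v \<Rightarrow> 'v \<Rightarrow> bool) \<Rightarrow> 'v set \<Rightarrow> 'v \<Rightarrow> 'v set" where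
  "V1 V Adj V2 u = insert u {w. \<exists>x\<in>V - V2. Adj u x \<and> connected_in (V - V2) Adj x w}"

end

theory Submission
  imports Defs "HOL-Computational_Algebra.Computational_Algebra" "Jordan_Normal_Form.Determinant"
begin

definition Gc :: "int \<Rightarrow> nat \<Rightarrow> complex" where
  "Gc n t = (-1) ^ t * (of_int n gchoose t)"

definition Gf :: "nat \<Rightarrow> int \<Rightarrow> complex fps" where
  "Gf g n = Abs_fps (\<lambda>j. if g dvd j then Gc n (j div g) else 0)"

lemma Gf_nth: "Gf g n $ j = (if g dvd j then Gc n (j div g) else 0)"
  by (simp add: Gf_def)

lemma sum_mult_reindex:
  fixes f :: "nat \<Rightarrow> 'a::comm_monoid_add"
  assumes g: "g > 0" and z: "\<And>i. \<not> g dvd i \<Longrightarrow> f i = 0"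
  shows "(\<Sum>i=0..g*m. f i) = (\<Sum>t=0..m. f (g*t))"
proof -
  have "(\<Sum>i=0..g*m. f i) = (\<Sum>i\<in>(\<lambda>t. g*t) ` {0..m}. f i)"
  proof (rule sum.mono_neutral_right)
    show "\<forall>i\<in>{0..g * m} - (\<lambda>t. g * t) ` {0..m}. f i = 0"
    proof
      fix i assume i: "i \<in> {0..g * m} - (\<lambda>t. g * t) ` {0..m}"
      show "f i = 0"
      proof (cases "g dvd i")
        case True
        then obtain t where t: "i = g*t" by auto
        with i g have "t \<le> m" by auto
        with i t show ?thesis by auto
      qed (rule z)
    qed
  qed auto
  also have "\<dots> = (\<Sum>t=0..m. f (g*t))"
    using g by (subst sum.reindex) (auto simp: inj_on_def)
  finally show ?thesis .
qed

lemma Gf_add: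
  assumes g: "g > 0"
  shows "Gf g (a + b) = Gf g a * Gf g b"
proof (rule fps_ext)
  fix j
  show "Gf g (a + b) $ j = (Gf g a * Gf g b) $ j"
  proof (cases "g dvd j")
    case True
    then obtain m where j: "j = g * m" by auto
    have "(Gf g a * Gf g b) $ j = (\<Sum>i=0..g*m. Gf g a $ i * Gf g b $ (g*m - i))"
      by (simp add: fps_mult_nth j)
    also have "\<dots> = (\<Sum>t=0..m. Gf g a $ (g*t) * Gf g b $ (g*m - g*t))"
      by (rule sum_mult_reindex) (auto simp: g Gf_nth)
    also have "\<dots> = (\<Sum>t=0..m. Gc a t * Gc b (m - t))"
    proof (rule sum.cong)
      fix t assume "t \<in> {0..m}"
      then have "g*m - g*t = g*(m-t)" by (simp add: diff_mult_distrib2)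
      then show "Gf g a $ (g*t) * Gf g b $ (g*m - g*t) = Gc a t * Gc b (m - t)"
        using g by (simp add: Gf_nth)
    qed simp
    also have "\<dots> = (-1)^m * (\<Sum>t=0..m. (of_int a gchoose t) * (of_int b gchoose (m - t)))"
      unfolding sum_distrib_left
    proof (rule sum.cong)
      fix t assume "t \<in> {0..m}"
      then have "(-1::complex)^t * (-1)^(m-t) = (-1)^m"
        by (simp add: power_add[symmetric])
      then show "Gc a t * Gc b (m - t) = (-1)^m * ((of_int a gchoose t) * (of_int b gchoose (m - t)))"
        unfolding Gc_def by (metis (no_types, lifting) mult.assoc mult.left_commute)
    qed simp
    also have "\<dots> = Gc (a+b) m"
      by (simp add: gbinomial_Vandermonde Gc_def)
    also have "\<dots> = Gf g (a+b) $ j" using g by (simp add: Gf_nth j)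
    finally show ?thesis by simp
  next
    case False
    have "(Gf g a * Gf g b) $ j = (\<Sum>i=0..j. Gf g a $ i * Gf g b $ (j - i))"
      by (simp add: fps_mult_nth)
    also have "\<dots> = 0"
    proof (rule sum.neutral, safe)
      fix i assume "i \<in> {0..j}"
      then have "i \<le> j" by simp
      show "Gf g a $ i * Gf g b $ (j - i) = 0"
      proof (cases "g dvd i \<and> g dvd (j - i)")
        case True
        then have "g dvd (i + (j - i))" by (intro dvd_add) auto
        with \<open>i \<le> j\<close> False show ?thesis by simp
      next
        case False
        then show ?thesis by (auto simp: Gf_nth)
      qed
    qed
    finally show ?thesis using False by (simp add: Gf_nth)
  qed
qed

lemma Gf_0: "g > 0 \<Longrightarrow> Gf g 0 = 1"
proof (rule fps_ext)
  fix j assume g: "g > 0"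
  show "Gf g 0 $ j = 1 $ j"
  proof (cases "j = 0")
    case True then show ?thesis by (simp add: Gf_nth Gc_def)
  next
    case False
    show ?thesis
    proof (cases "g dvd j")
      case True
      then obtain m where j: "j = g*m" by auto
      with False have "m \<noteq> 0" by auto
      then obtain k where "m = Suc k" by (cases m) auto
      then show ?thesis using g False by (simp add: Gf_nth Gc_def j)
    qed (use False in \<open>simp add: Gf_nth\<close>)
  qed
qed

lemma Gf_1: "g > 0 \<Longrightarrow> Gf g 1 = fps_of_poly (1 - monom 1 g)"
proof (rule fps_ext)
  fix j assume g: "g > 0"
  show "Gf g 1 $ j = fps_of_poly (1 - monom 1 g) $ j"
  proof (cases "g dvd j")
    case True
    then obtain m where j: "j = g*m" by auto
    consider "m = 0" | "m = 1" | "m \<ge> 2" by linarith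
    then show ?thesis
    proof cases
      case 1 then show ?thesis using g by (simp add: Gf_nth Gc_def j coeff_monom)
    next
      case 2 then show ?thesis using g by (simp add: Gf_nth Gc_def j coeff_monom)
    next
      case 3
      have "(1::complex) gchoose m = 0"
        using binomial_gbinomial[of 1 m, where 'a=complex] 3 by (simp add: binomial_eq_0)
      then show ?thesis using g 3 by (simp add: Gf_nth Gc_def j coeff_monom)
    qed
  next
    case False
    have "j \<noteq> 0" using False by (metis dvd_0_right)
    moreover have "j \<noteq> g" using False by auto
    ultimately show ?thesis using False by (auto simp: Gf_nth coeff_monom)
  qed
qed

lemma Gf_nat: "g > 0 \<Longrightarrow> Gf g (int k) = fps_of_poly ((1 - monom 1 g) ^ k)"
proof (induction k)
  case 0 then show ?case by (simp add: Gf_0)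
next
  case (Suc k)
  have "Gf g (int (Suc k)) = Gf g (int k + 1)" by (simp add: add.commute)
  also have "\<dots> = Gf g (int k) * Gf g 1" by (rule Gf_add[OF Suc.prems])
  also have "\<dots> = fps_of_poly ((1 - monom 1 g) ^ Suc k)"
    using Suc by (simp add: Gf_1 fps_of_poly_mult fps_of_poly_power mult.commute)
  finally show ?case .
qed

lemma Gf_neg: "g > 0 \<Longrightarrow> Gf g (- int k) * fps_of_poly ((1 - monom 1 g) ^ k) = 1"
  using Gf_add[of g "- int k" "int k"] by (simp add: Gf_nat Gf_0)


definition Ks :: "'i set \<Rightarrow> ('i \<Rightarrow> nat) \<Rightarrow> nat \<Rightarrow> ('i \<Rightarrow> nat) set" where
  "Ks I g Q = {\<kappa>. (\<forall>i. i \<notin> I \<longrightarrow> \<kappa> i = 0) \<and> (\<Sum>i\<in>I. \<kappa> i * g i) = Q}"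

lemma Ks_finite:
  assumes I: "finite I" and g: "\<forall>i\<in>I. g i > 0"
  shows "finite (Ks I g Q)"
proof (rule finite_subset)
  show "Ks I g Q \<subseteq> {f. \<forall>x. (x \<in> I \<longrightarrow> f x \<in> {0..Q}) \<and> (x \<notin> I \<longrightarrow> f x = 0)}"
  proof safe
    fix \<kappa> x assume k: "\<kappa> \<in> Ks I g Q" and x: "x \<in> I"
    have "g x \<ge> 1" using g x by auto
    then have "\<kappa> x \<le> \<kappa> x * g x" by simp
    also have "\<dots> \<le> (\<Sum>i\<in>I. \<kappa> i * g i)" using I x by (intro member_le_sum) auto
    finally show "\<kappa> x \<in> {0..Q}" using k by (simp add: Ks_def)
  qed (auto simp: Ks_def)
qed (intro finite_set_of_finite_funs I finite_atLeastAtMost)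

lemma sum_mult_reindex2:
  fixes f :: "nat \<Rightarrow> 'a::comm_monoid_add"
  assumes g: "g > 0" and z: "\<And>i. \<not> g dvd i \<Longrightarrow> f i = 0"
  shows "(\<Sum>i=0..Q. f i) = (\<Sum>t=0..Q div g. f (g*t))"
proof -
  have "(\<Sum>i=0..Q. f i) = (\<Sum>i\<in>(\<lambda>t. g*t) ` {0..Q div g}. f i)"
  proof (rule sum.mono_neutral_right)
    show "\<forall>i\<in>{0..Q} - (\<lambda>t. g * t) ` {0..Q div g}. f i = 0"
    proof
      fix i assume i: "i \<in> {0..Q} - (\<lambda>t. g * t) ` {0..Q div g}"
      show "f i = 0"
      proof (cases "g dvd i")
        case True
        then obtain t where t: "i = g*t" by auto
        with i g have "t \<le> Q div g" by (simp add: less_eq_div_iff_mult_less_eq mult.commute)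
        with i t show ?thesis by auto
      qed (rule z)
    qed
  next
    show "(\<lambda>t. g * t) ` {0..Q div g} \<subseteq> {0..Q}"
      using g by (auto simp: less_eq_div_iff_mult_less_eq mult.commute)
  qed auto
  also have "\<dots> = (\<Sum>t=0..Q div g. f (g*t))"
    using g by (subst sum.reindex) (auto simp: inj_on_def)
  finally show ?thesis .
qed

lemma prod_Gf_nth:
  assumes I: "finite I" and g: "\<forall>i\<in>I. g i > 0"
  shows "(\<Prod>i\<in>I. Gf (g i) (n i)) $ Q = (\<Sum>\<kappa>\<in>Ks I g Q. \<Prod>i\<in>I. Gc (n i) (\<kappa> i))"
  using I g
proof (induction I arbitrary: Q rule: finite_induct)
  case empty
  show ?case
  proof (cases "Q = 0")
    case True
    have "Ks {} g Q = {\<lambda>_. 0}" using True by (auto simp: Ks_def)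
    then show ?thesis using True by simp
  next
    case False
    have "Ks {} g Q = {}" using False by (auto simp: Ks_def)
    then show ?thesis using False by simp
  qed
next
  case (insert a I)
  have ga: "g a > 0" using insert by auto
  have gI: "\<forall>i\<in>I. g i > 0" using insert by auto
  let ?F = "\<Prod>i\<in>I. Gf (g i) (n i)"
  let ?S = "Sigma {0..Q div g a} (\<lambda>t. Ks I g (Q - g a * t))"
  have "(\<Prod>i\<in>insert a I. Gf (g i) (n i)) $ Q = (Gf (g a) (n a) * ?F) $ Q"
    using insert by simp
  also have "\<dots> = (\<Sum>j=0..Q. Gf (g a) (n a) $ j * ?F $ (Q - j))"
    by (simp add: fps_mult_nth)
  also have "\<dots> = (\<Sum>t=0..Q div g a. Gf (g a) (n a) $ (g a * t) * ?F $ (Q - g a * t))"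
    by (rule sum_mult_reindex2[OF ga]) (simp add: Gf_nth)
  also have "\<dots> = (\<Sum>t=0..Q div g a. Gc (n a) t * (\<Sum>\<kappa>\<in>Ks I g (Q - g a * t). \<Prod>i\<in>I. Gc (n i) (\<kappa> i)))"
    using ga by (intro sum.cong refl) (simp add: Gf_nth insert.IH[OF gI])
  also have "\<dots> = (\<Sum>t=0..Q div g a. \<Sum>\<kappa>\<in>Ks I g (Q - g a * t). Gc (n a) t * (\<Prod>i\<in>I. Gc (n i) (\<kappa> i)))"
    by (simp add: sum_distrib_left)
  also have "\<dots> = (\<Sum>(t,\<kappa>)\<in>?S. Gc (n a) t * (\<Prod>i\<in>I. Gc (n i) (\<kappa> i)))"
    by (rule sum.Sigma) (auto intro: Ks_finite[OF insert(1) gI])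
  also have "\<dots> = (\<Sum>\<kappa>\<in>Ks (insert a I) g Q. \<Prod>i\<in>insert a I. Gc (n i) (\<kappa> i))"
  proof (rule sum.reindex_bij_witness[where j = "\<lambda>p. (snd p)(a := fst p)" and i = "\<lambda>\<kappa>. (\<kappa> a, \<kappa>(a := 0))"])
    fix p assume p: "p \<in> ?S"
    obtain t \<kappa> where pe: "p = (t, \<kappa>)" by (cases p)
    from p pe have t: "t \<le> Q div g a" and k: "\<kappa> \<in> Ks I g (Q - g a * t)" by auto
    have ka: "\<kappa> a = 0" using k insert by (auto simp: Ks_def)
    show "(((snd p)(a := fst p)) a, ((snd p)(a := fst p))(a := 0)) = p"
      using ka pe by auto
    have tQ: "g a * t \<le> Q" using t ga by (simp add: less_eq_div_iff_mult_less_eq mult.commute)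
    have "(\<Sum>i\<in>insert a I. (\<kappa>(a := t)) i * g i) = t * g a + (\<Sum>i\<in>I. \<kappa> i * g i)"
      using insert by (simp add: sum.insert) (intro sum.cong, auto)
    also have "\<dots> = Q" using k tQ by (simp add: Ks_def mult.commute)
    finally show "(snd p)(a := fst p) \<in> Ks (insert a I) g Q"
      using k pe by (auto simp: Ks_def)
    show "(\<Prod>i\<in>insert a I. Gc (n i) (((snd p)(a := fst p)) i)) = (case p of (t,\<kappa>) \<Rightarrow> Gc (n a) t * (\<Prod>i\<in>I. Gc (n i) (\<kappa> i)))"
    proof -
      have "(\<Prod>i\<in>I. Gc (n i) (if i = a then t else \<kappa> i)) = (\<Prod>i\<in>I. Gc (n i) (\<kappa> i))"
        using insert by (intro prod.cong) auto
      then show ?thesis using insert pe by (simp add: prod.insert)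
    qed
  next
    fix \<kappa> assume k: "\<kappa> \<in> Ks (insert a I) g Q"
    show "(snd (\<kappa> a, \<kappa>(a := 0)))(a := fst (\<kappa> a, \<kappa>(a := 0))) = \<kappa>" by auto
    have sum: "\<kappa> a * g a + (\<Sum>i\<in>I. \<kappa> i * g i) = Q"
      using k insert by (simp add: Ks_def sum.insert)
    then have "\<kappa> a \<le> Q div g a" using ga by (simp add: less_eq_div_iff_mult_less_eq)
    moreover have "(\<Sum>i\<in>I. (\<kappa>(a:=0)) i * g i) = Q - g a * \<kappa> a"
    proof -
      have "(\<Sum>i\<in>I. (\<kappa>(a:=0)) i * g i) = (\<Sum>i\<in>I. \<kappa> i * g i)"
        using insert by (intro sum.cong) auto
      then show ?thesis using sum by (simp add: mult.commute)
    qed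
    moreover have "\<forall>i. i \<notin> I \<longrightarrow> (\<kappa>(a:=0)) i = 0" using k by (auto simp: Ks_def)
    ultimately show "(\<kappa> a, \<kappa>(a := 0)) \<in> ?S" by (auto simp: Ks_def)
  qed
  finally show ?case .
qed


lemma dvd_by_orders:
  fixes p q :: "complex poly"
  assumes "p \<noteq> 0" "q \<noteq> 0" "\<forall>a. order a p \<le> order a q"
  shows "p dvd q"
  using assms
proof (induction "degree p" arbitrary: p q rule: less_induct)
  case less
  show ?case
  proof (cases "degree p = 0")
    case True
    then have "is_unit p" using less.prems is_unit_iff_degree by blast
    then show ?thesis by (rule unit_imp_dvd)
  next
    case False
    then have "\<not> constant (poly p)" using constant_degree[of p] by simp
    then obtain a where a: "poly p a = 0"
      using fundamental_theorem_of_algebra by blast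
    have "[:-a,1:] dvd p" using a dvd_iff_poly_eq_0[of "-a" p] by simp
    then obtain p' where p': "p = [:-a,1:] * p'" by (auto elim: dvdE)
    have "order a p \<noteq> 0" using a less.prems order_root by blast
    then have "order a q \<noteq> 0" using less.prems(3) by (metis le_0_eq)
    then have "poly q a = 0" using order_root by blast
    then have "[:-a,1:] dvd q" using dvd_iff_poly_eq_0[of "-a" q] by simp
    then obtain q' where q': "q = [:-a,1:] * q'" by (auto elim: dvdE)
    have p0: "p' \<noteq> 0" using p' less.prems by auto
    have q0: "q' \<noteq> 0" using q' less.prems by auto
    have ord: "\<forall>b. order b p' \<le> order b q'"
    proof
      fix b
      have pm: "[:-a,1:] * p' \<noteq> 0" using p' less.prems(1) by metis
      have qm: "[:-a,1:] * q' \<noteq> 0" using q' less.prems(2) by metis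
      have "order b p = order b [:-a,1:] + order b p'"
        unfolding p' by (rule order_mult[OF pm])
      moreover have "order b q = order b [:-a,1:] + order b q'"
        unfolding q' by (rule order_mult[OF qm])
      ultimately show "order b p' \<le> order b q'" using less.prems(3) by (metis add_le_cancel_left)
    qed
    have "degree p = degree [:-a,1:] + degree p'"
      unfolding p' by (rule degree_mult_eq) (use p0 in auto)
    then have "degree p = Suc (degree p')" by simp
    then have "degree p' < degree p" by simp
    then have "p' dvd q'" using less.hyps p0 q0 ord by blast
    then have "[:-a,1:] * p' dvd [:-a,1:] * q'" by (rule mult_dvd_mono[OF dvd_refl])
    then show ?thesis using p' q' by metis
  qed
qed

lemma L_nonzero: "g > 0 \<Longrightarrow> (1 - monom 1 g :: 'a::comm_ring_1 poly) \<noteq> 0"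
proof
  assume g: "g > 0" and "(1 - monom 1 g :: 'a poly) = 0"
  then have "coeff (1 - monom 1 g :: 'a poly) 0 = 0" by simp
  then show False using g by (simp add: coeff_monom)
qed

lemma degree_L: "g > 0 \<Longrightarrow> degree (1 - monom 1 g :: 'a::comm_ring_1 poly) = g"
proof (rule antisym)
  assume g: "g > 0"
  show "degree (1 - monom 1 g :: 'a poly) \<le> g"
    by (rule order.trans[OF degree_diff_le_max]) (auto intro: degree_monom_le)
  have "coeff (1 - monom 1 g :: 'a poly) g \<noteq> 0" using g by (simp add: coeff_monom)
  then show "g \<le> degree (1 - monom 1 g :: 'a poly)" by (rule le_degree)
qed

lemma order_L:
  fixes a :: complex
  assumes g: "g > 0"
  shows "order a (1 - monom 1 g) = (if a ^ g = 1 then 1 else 0)"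
proof (cases "a ^ g = 1")
  case False
  have "poly (1 - monom 1 g) a \<noteq> 0" using False by (simp add: poly_monom)
  then show ?thesis using False by (simp add: order_0I)
next
  case True
  have a0: "a \<noteq> 0" using True g by (metis power_0_left less_not_refl2 zero_neq_one)
  have r: "poly (1 - monom 1 g) a = 0" using True by (simp add: poly_monom)
  have "pderiv (1 - monom 1 g :: complex poly) = - monom (of_nat g) (g - 1)"
    by (simp add: pderiv_diff pderiv_monom)
  then have "poly (pderiv (1 - monom 1 g :: complex poly)) a = - of_nat g * a ^ (g - 1)"
    by (simp add: poly_monom)
  also have "\<dots> \<noteq> 0" using a0 g by simp
  finally have "order a (pderiv (1 - monom 1 g :: complex poly)) = 0" by (rule order_0I)
  then show ?thesis using order_pderiv[OF L_nonzero[OF g] r] True by simp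
qed

lemma order_prod:
  fixes p :: "'i \<Rightarrow> 'a::idom poly"
  assumes "finite I" "\<forall>i\<in>I. p i \<noteq> 0"
  shows "order a (\<Prod>i\<in>I. p i) = (\<Sum>i\<in>I. order a (p i))"
  using assms
proof (induction I rule: finite_induct)
  case empty
  have "order a (1::'a poly) = 0" by (rule order_0I) simp
  then show ?case by simp
next
  case (insert x I)
  have "(\<Prod>i\<in>I. p i) \<noteq> 0" using insert by auto
  then have "p x * (\<Prod>i\<in>I. p i) \<noteq> 0" using insert by auto
  then show ?case using insert by (simp add: order_mult)
qed

lemma order_power:
  fixes p :: "'a::idom poly"
  assumes "p \<noteq> 0"
  shows "order a (p ^ k) = k * order a p"
proof (induction k)
  case 0
  have "order a (1::'a poly) = 0" by (rule order_0I) simp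
  then show ?case by simp
next
  case (Suc k)
  then show ?case using assms by (simp add: order_mult)
qed


lemma poly_bound:
  fixes I :: "'i set" and g :: "'i \<Rightarrow> nat" and n :: "'i \<Rightarrow> int"
  assumes I: "finite I" and g: "\<forall>i\<in>I. g i > 0"
    and Z: "\<forall>\<zeta>::complex. 0 \<le> (\<Sum>i\<in>{i\<in>I. \<zeta> ^ g i = 1}. n i)"
    and Q: "int Q > (\<Sum>i\<in>I. n i * int (g i))"
  shows "(\<Sum>\<kappa>\<in>Ks I g Q. \<Prod>i\<in>I. Gc (n i) (\<kappa> i)) = 0"
proof -
  define Ip where "Ip = {i\<in>I. 0 \<le> n i}"
  define In where "In = {i\<in>I. n i < 0}"
  define L :: "'i \<Rightarrow> complex poly" where "L i = 1 - monom 1 (g i)" for i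
  define num where "num = (\<Prod>i\<in>Ip. L i ^ nat (n i))"
  define den where "den = (\<Prod>i\<in>In. L i ^ nat (- n i))"
  have fIp: "finite Ip" and fIn: "finite In" using I by (auto simp: Ip_def In_def)
  have disj: "Ip \<inter> In = {}" and un: "I = Ip \<union> In" by (auto simp: Ip_def In_def)
  have L0: "L i \<noteq> 0" if "i \<in> I" for i using g that L_nonzero by (auto simp: L_def)
  have num0: "num \<noteq> 0" unfolding num_def using fIp L0 by (auto simp: Ip_def)
  have den0: "den \<noteq> 0" unfolding den_def using fIn L0 by (auto simp: In_def)
  have ordL: "order a (L i) = (if a ^ g i = 1 then 1 else 0)" if "i \<in> I" for a i
    using order_L[of "g i" a] g that by (simp add: L_def)
  have ordnum: "int (order a num) = (\<Sum>i\<in>Ip. if a ^ g i = 1 then n i else 0)" for a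
  proof -
    have "order a num = (\<Sum>i\<in>Ip. order a (L i ^ nat (n i)))"
      unfolding num_def using fIp L0 by (intro order_prod) (auto simp: Ip_def)
    also have "\<dots> = (\<Sum>i\<in>Ip. nat (n i) * (if a ^ g i = 1 then 1 else 0))"
      using L0 ordL by (intro sum.cong refl) (auto simp: order_power Ip_def)
    finally show ?thesis by (simp add: Ip_def of_nat_sum if_distrib cong: if_cong)
  qed
  have ordden: "int (order a den) = (\<Sum>i\<in>In. if a ^ g i = 1 then - n i else 0)" for a
  proof -
    have "order a den = (\<Sum>i\<in>In. order a (L i ^ nat (- n i)))"
      unfolding den_def using fIn L0 by (intro order_prod) (auto simp: In_def)
    also have "\<dots> = (\<Sum>i\<in>In. nat (- n i) * (if a ^ g i = 1 then 1 else 0))"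
      using L0 ordL by (intro sum.cong refl) (auto simp: order_power In_def)
    finally show ?thesis by (simp add: In_def of_nat_sum if_distrib cong: if_cong)
  qed
  have "\<forall>a::complex. order a den \<le> order a num"
  proof
    fix a :: complex
    have "(\<Sum>i\<in>I. if a ^ g i = 1 then n i else 0) = (\<Sum>i\<in>{i\<in>I. a ^ g i = 1}. n i)"
      using I by (simp add: sum.inter_filter)
    then have "0 \<le> (\<Sum>i\<in>I. if a ^ g i = 1 then n i else 0)" using Z[rule_format, of a] by simp
    also have "(\<Sum>i\<in>I. if a ^ g i = 1 then n i else 0)
        = (\<Sum>i\<in>Ip. if a ^ g i = 1 then n i else 0) + (\<Sum>i\<in>In. if a ^ g i = 1 then n i else 0)"
      unfolding un using fIp fIn disj by (rule sum.union_disjoint)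
    also have "\<dots> = int (order a num) - int (order a den)"
      by (simp add: ordnum ordden sum_negf[symmetric] if_distrib cong: if_cong)
    finally show "order a den \<le> order a num" by simp
  qed
  then have "den dvd num" using dvd_by_orders num0 den0 by blast
  then obtain P where P: "num = den * P" by (auto elim: dvdE)
  have P0: "P \<noteq> 0" using P num0 by auto
  have degL: "degree (L i) = g i" if "i \<in> I" for i using degree_L g that by (auto simp: L_def)
  have "degree num = (\<Sum>i\<in>Ip. degree (L i ^ nat (n i)))"
    unfolding num_def using L0 by (intro degree_prod_sum_eq) (auto simp: Ip_def)
  also have "\<dots> = (\<Sum>i\<in>Ip. nat (n i) * g i)"
    by (intro sum.cong refl) (auto simp: degree_power_eq L0 degL Ip_def)
  finally have dnum: "int (degree num) = (\<Sum>i\<in>Ip. n i * int (g i))"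
    by (simp add: of_nat_sum Ip_def)
  have "degree den = (\<Sum>i\<in>In. degree (L i ^ nat (- n i)))"
    unfolding den_def using L0 by (intro degree_prod_sum_eq) (auto simp: In_def)
  also have "\<dots> = (\<Sum>i\<in>In. nat (- n i) * g i)"
    by (intro sum.cong refl) (auto simp: degree_power_eq L0 degL In_def)
  finally have dden: "int (degree den) = (\<Sum>i\<in>In. - n i * int (g i))"
    by (simp add: of_nat_sum In_def)
  have "degree num = degree den + degree P" unfolding P using den0 P0 by (rule degree_mult_eq)
  then have "int (degree P) = (\<Sum>i\<in>Ip. n i * int (g i)) + (\<Sum>i\<in>In. n i * int (g i))"
    using dnum dden by (simp add: sum_negf)
  also have "\<dots> = (\<Sum>i\<in>I. n i * int (g i))"
    unfolding un using fIp fIn disj by (rule sum.union_disjoint[symmetric])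
  finally have "degree P < Q" using Q by simp
  then have cP: "coeff P Q = 0" by (rule coeff_eq_0)
  have gIp: "\<forall>i\<in>Ip. g i > 0" and gIn: "\<forall>i\<in>In. g i > 0" using g by (auto simp: Ip_def In_def)
  have A: "(\<Prod>i\<in>Ip. Gf (g i) (n i)) = fps_of_poly num"
  proof -
    have "(\<Prod>i\<in>Ip. Gf (g i) (n i)) = (\<Prod>i\<in>Ip. fps_of_poly (L i ^ nat (n i)))"
    proof (intro prod.cong refl)
      fix i assume i: "i \<in> Ip"
      then have "n i = int (nat (n i))" by (simp add: Ip_def)
      then show "Gf (g i) (n i) = fps_of_poly (L i ^ nat (n i))"
        using Gf_nat[of "g i" "nat (n i)"] gIp i by (simp add: L_def)
    qed
    then show ?thesis by (simp add: num_def fps_of_poly_prod)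
  qed
  have B: "(\<Prod>i\<in>In. Gf (g i) (n i)) * fps_of_poly den = 1"
  proof -
    have "(\<Prod>i\<in>In. Gf (g i) (n i)) * fps_of_poly den
        = (\<Prod>i\<in>In. Gf (g i) (n i) * fps_of_poly (L i ^ nat (- n i)))"
      by (simp add: den_def fps_of_poly_prod prod.distrib)
    also have "\<dots> = (\<Prod>i\<in>In. 1)"
    proof (intro prod.cong refl)
      fix i assume i: "i \<in> In"
      then have "n i = - int (nat (- n i))" by (simp add: In_def)
      then show "Gf (g i) (n i) * fps_of_poly (L i ^ nat (- n i)) = 1"
        using Gf_neg[of "g i" "nat (- n i)"] gIn i by (simp add: L_def)
    qed
    finally show ?thesis by simp
  qed
  have "(\<Prod>i\<in>I. Gf (g i) (n i)) = (\<Prod>i\<in>Ip. Gf (g i) (n i)) * (\<Prod>i\<in>In. Gf (g i) (n i))"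
    unfolding un using fIp fIn disj by (rule prod.union_disjoint)
  also have "\<dots> = fps_of_poly P * (fps_of_poly den * (\<Prod>i\<in>In. Gf (g i) (n i)))"
    by (simp add: A P fps_of_poly_mult mult_ac)
  also have "\<dots> = fps_of_poly P" using B by (simp add: mult.commute)
  finally have "(\<Prod>i\<in>I. Gf (g i) (n i)) $ Q = 0" using cP by simp
  then show ?thesis using prod_Gf_nth[OF I g] by simp
qed


locale plumb =
  fixes V :: "'v set" and Adj :: "'v \<Rightarrow> 'v \<Rightarrow> bool" and e :: "'v \<Rightarrow> int"
  assumes tree: "is_tree V Adj" and negdef: "neg_definite V Adj e"
begin

lemma finV: "finite V" using tree by (simp add: is_tree_def)
lemma adjV: "Adj a b \<Longrightarrow> a \<in> V \<and> b \<in> V" using tree by (simp add: is_tree_def)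
lemma adj_sym: "Adj a b \<Longrightarrow> Adj b a" using tree by (simp add: is_tree_def)
lemma adj_irr: "\<not> Adj a a" using tree by (simp add: is_tree_def)
lemma connV: "is_connected V Adj" using tree by (simp add: is_tree_def)
lemma card_edges: "card (edges_of Adj) = card V - 1" using tree by (simp add: is_tree_def)

lemma inter_sym: "inter Adj e a b = inter Adj e b a"
  by (auto simp: inter_def intro: adj_sym)

definition pS :: "'v set \<Rightarrow> ('v \<Rightarrow> rat) \<Rightarrow> 'v \<Rightarrow> rat" where
  "pS S x w = (\<Sum>a\<in>S. x a * inter Adj e a w)"

lemma pair_E_pS: "pair_E V Adj e = pS V"
  by (intro ext) (simp add: pair_E_def pS_def)

lemma form_eq: "form V Adj e x y = (\<Sum>b\<in>V. y b * pS V x b)"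
  unfolding form_def pS_def
  by (subst sum.swap) (simp add: sum_distrib_left mult_ac)

lemma pS_supp:
  assumes "S \<subseteq> V" "\<forall>w. w \<notin> S \<longrightarrow> x w = 0"
  shows "pS V x b = pS S x b"
  unfolding pS_def using assms finV
  by (intro sum.mono_neutral_right) auto

lemma pS_diff: "pS S (\<lambda>a. x a - y a) w = pS S x w - pS S y w"
  by (simp add: pS_def sum_subtractf left_diff_distrib)

lemma kernel_zero:
  assumes S: "S \<subseteq> V" and sx: "\<forall>w. w \<notin> S \<longrightarrow> x w = 0" and p: "\<forall>w\<in>S. pS S x w = 0"
  shows "x w = 0"
proof -
  have "form V Adj e x x = (\<Sum>b\<in>V. x b * pS S x b)"
    by (simp add: form_eq pS_supp[OF S sx])
  also have "\<dots> = 0" using p sx by (intro sum.neutral) auto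
  finally have "\<not> (\<exists>v\<in>V. x v \<noteq> 0)" using negdef by (auto simp: neg_definite_def)
  then show ?thesis using sx S by blast
qed

lemma solve_unique:
  assumes S: "S \<subseteq> V"
    and x: "\<forall>w\<in>S. pS S x w = c w" "\<forall>w. w \<notin> S \<longrightarrow> x w = 0"
    and y: "\<forall>w\<in>S. pS S y w = c w" "\<forall>w. w \<notin> S \<longrightarrow> y w = 0"
  shows "x = y"
proof
  fix w
  have "(\<lambda>a. x a - y a) w = 0"
    by (rule kernel_zero[OF S]) (use x y in \<open>auto simp: pS_diff\<close>)
  then show "x w = y w" by simp
qed

lemma solve_exists:
  assumes S: "S \<subseteq> V"
  shows "\<exists>x. (\<forall>w\<in>S. pS S x w = c w) \<and> (\<forall>w. w \<notin> S \<longrightarrow> x w = 0)"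
proof -
  have fS: "finite S" using S finV finite_subset by blast
  define n where "n = card S"
  obtain h where h: "bij_betw h {0..<n} S" using ex_bij_betw_nat_finite[OF fS] n_def by blast
  define A :: "rat mat" where "A = mat n n (\<lambda>(i,j). inter Adj e (h j) (h i))"
  have A: "A \<in> carrier_mat n n" by (simp add: A_def)
  define phi where "phi y = (\<lambda>a. if a \<in> S then y $ (inv_into {0..<n} h a) else 0)" for y :: "rat vec"
  have phi_supp: "\<forall>w. w \<notin> S \<longrightarrow> phi y w = 0" for y by (simp add: phi_def)
  have key: "pS S (phi y) (h i) = (A *\<^sub>v y) $ i" if i: "i < n" and y: "y \<in> carrier_vec n" for i y
  proof -
    have "pS S (phi y) (h i) = (\<Sum>j\<in>{0..<n}. phi y (h j) * inter Adj e (h j) (h i))"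
      unfolding pS_def by (rule sum.reindex_bij_betw[symmetric, OF h])
    also have "\<dots> = (\<Sum>j\<in>{0..<n}. A $$ (i,j) * y $ j)"
    proof (intro sum.cong refl)
      fix j assume j: "j \<in> {0..<n}"
      have "h j \<in> S" using h j by (auto simp: bij_betw_def)
      moreover have "inv_into {0..<n} h (h j) = j" using h j by (auto simp: bij_betw_def)
      ultimately show "phi y (h j) * inter Adj e (h j) (h i) = A $$ (i,j) * y $ j"
        using i j by (simp add: phi_def A_def)
    qed
    also have "\<dots> = (A *\<^sub>v y) $ i"
      using i y A by (simp add: scalar_prod_def row_def)
    finally show ?thesis .
  qed
  have "det A \<noteq> 0"
  proof
    assume "det A = 0"
    then obtain y where y: "y \<in> carrier_vec n" "y \<noteq> 0\<^sub>v n" "A *\<^sub>v y = 0\<^sub>v n"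
      using det_0_iff_vec_prod_zero_field[OF A] by blast
    have "\<forall>w\<in>S. pS S (phi y) w = 0"
    proof
      fix w assume "w \<in> S"
      then obtain i where i: "i < n" "w = h i" using h by (auto simp: bij_betw_def)
      show "pS S (phi y) w = 0" using key[OF i(1) y(1)] y(3) i by simp
    qed
    then have z: "phi y w = 0" for w using kernel_zero[OF S phi_supp] by blast
    have "y = 0\<^sub>v n"
    proof (rule eq_vecI)
      fix j assume "j < dim_vec (0\<^sub>v n :: rat vec)"
      then have j: "j < n" by simp
      have "h j \<in> S" using h j by (auto simp: bij_betw_def)
      moreover have "inv_into {0..<n} h (h j) = j" using h j by (auto simp: bij_betw_def)
      ultimately have "phi y (h j) = y $ j" by (simp add: phi_def)
      then show "y $ j = 0\<^sub>v n $ j" using z j by simp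
    qed (use y in simp)
    with y show False by simp
  qed
  then have "A \<in> Units (ring_mat TYPE(rat) n ())" by (rule det_non_zero_imp_unit[OF A])
  then obtain B where B: "B \<in> carrier_mat n n" "A * B = 1\<^sub>m n"
    by (auto simp: Units_def ring_mat_simps)
  define b where "b = vec n (\<lambda>i. c (h i))"
  define y where "y = B *\<^sub>v b"
  have y: "y \<in> carrier_vec n" using B by (simp add: y_def b_def)
  have Ay: "A *\<^sub>v y = b" using A B by (simp add: y_def b_def assoc_mult_mat_vec[symmetric])
  show ?thesis
  proof (intro exI conjI ballI allI impI)
    fix w assume "w \<in> S"
    then obtain i where i: "i < n" "w = h i" using h by (auto simp: bij_betw_def)
    show "pS S (phi y) w = c w" using key[OF i(1) y] Ay i by (simp add: b_def)
  qed (simp add: phi_def)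
qed

definition dualS :: "'v set \<Rightarrow> 'v \<Rightarrow> ('v \<Rightarrow> rat)" where
  "dualS S v = (THE x. (\<forall>w\<in>S. pS S x w = (if w = v then -1 else 0)) \<and> (\<forall>w. w \<notin> S \<longrightarrow> x w = 0))"

lemma dualS_ex1:
  assumes S: "S \<subseteq> V"
  shows "\<exists>!x. (\<forall>w\<in>S. pS S x w = (if w = v then -1 else 0)) \<and> (\<forall>w. w \<notin> S \<longrightarrow> x w = 0)"
proof -
  obtain x where x: "(\<forall>w\<in>S. pS S x w = (if w = v then -1 else 0)) \<and> (\<forall>w. w \<notin> S \<longrightarrow> x w = 0)"
    using solve_exists[OF S, of "\<lambda>w. if w = v then -1 else 0"] by blast
  show ?thesis
  proof (rule ex1I[where a=x])
    fix y assume "(\<forall>w\<in>S. pS S y w = (if w = v then -1 else 0)) \<and> (\<forall>w. w \<notin> S \<longrightarrow> y w = 0)"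
    then show "y = x" using x solve_unique[OF S, where c="\<lambda>w. if w = v then -1 else 0"] by blast
  qed (rule x)
qed

lemma dualS:
  assumes S: "S \<subseteq> V"
  shows "(\<forall>w\<in>S. pS S (dualS S v) w = (if w = v then -1 else 0)) \<and> (\<forall>w. w \<notin> S \<longrightarrow> dualS S v w = 0)"
  unfolding dualS_def by (rule theI'[OF dualS_ex1[OF S]])

lemma dualS_eq: "S \<subseteq> V \<Longrightarrow> w \<in> S \<Longrightarrow> pS S (dualS S v) w = (if w = v then -1 else 0)"
  using dualS by blast
lemma dualS_out: "S \<subseteq> V \<Longrightarrow> w \<notin> S \<Longrightarrow> dualS S v w = 0"
  using dualS by blast
lemma dualS_unique:
  assumes "S \<subseteq> V" "\<forall>w\<in>S. pS S x w = (if w = v then -1 else 0)" "\<forall>w. w \<notin> S \<longrightarrow> x w = 0"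
  shows "x = dualS S v"
  using solve_unique[OF assms(1) assms(2,3)] dualS[OF assms(1)] by blast

lemma Edual_eq: "Edual V Adj e v = dualS V v"
  by (simp add: Edual_def dualS_def pair_E_pS)

end


context plumb begin

lemma e_neg: "w \<in> V \<Longrightarrow> e w < 0"
proof -
  assume w: "w \<in> V"
  define x :: "'v \<Rightarrow> rat" where "x a = (if a = w then 1 else 0)" for a
  have xx: "x a * x b * inter Adj e a b = (if a = w then (if b = w then inter Adj e w w else 0) else 0)" for a b
    by (simp add: x_def)
  have "form V Adj e x x = (\<Sum>a\<in>V. \<Sum>b\<in>V. x a * x b * inter Adj e a b)" by (simp add: form_def)
  also have "\<dots> = (\<Sum>a\<in>V. (if a = w then (\<Sum>b\<in>V. (if b = w then inter Adj e w w else 0)) else 0))"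
    unfolding xx by (intro sum.cong refl) auto
  also have "\<dots> = inter Adj e w w" using finV w by simp
  also have "\<dots> = of_int (e w)" by (simp add: inter_def)
  finally have "form V Adj e x x = of_int (e w)" .
  moreover have "form V Adj e x x < 0" using negdef w by (auto simp: neg_definite_def x_def)
  ultimately show ?thesis by simp
qed

lemma pS_expand:
  assumes "S \<subseteq> V" "w \<in> S"
  shows "pS S x w = x w * of_int (e w) + (\<Sum>a\<in>{a\<in>S. Adj a w}. x a)"
proof -
  have fS: "finite S" using assms finV finite_subset by blast
  have "pS S x w = x w * inter Adj e w w + (\<Sum>a\<in>S - {w}. x a * inter Adj e a w)"
    unfolding pS_def using fS assms by (simp add: sum.remove)
  also have "(\<Sum>a\<in>S - {w}. x a * inter Adj e a w) = (\<Sum>a\<in>S - {w}. if Adj a w then x a else 0)"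
    by (intro sum.cong refl) (auto simp: inter_def)
  also have "\<dots> = (\<Sum>a\<in>{a\<in>S - {w}. Adj a w}. x a)"
    by (rule sum.inter_filter[symmetric]) (use fS in simp)
  also have "{a\<in>S - {w}. Adj a w} = {a\<in>S. Adj a w}" using adj_irr by auto
  finally show ?thesis by (simp add: inter_def)
qed

lemma pS_add: "pS S (\<lambda>a. x a + y a) w = pS S x w + pS S y w"
  by (simp add: pS_def sum.distrib distrib_right)

lemma dualS_nonneg:
  assumes S: "S \<subseteq> V" and v: "v \<in> S"
  shows "dualS S v w \<ge> 0"
proof -
  have fS: "finite S" using assms finV finite_subset by blast
  define x where "x = dualS S v"
  define y where "y a = min (x a) 0" for a
  define z where "z a = max (x a) 0" for a
  have xyz: "x = (\<lambda>a. y a + z a)" by (auto simp: y_def z_def)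
  have xout: "\<forall>a. a \<notin> S \<longrightarrow> x a = 0" using dualS_out[OF S] by (simp add: x_def)
  have yout: "\<forall>a. a \<notin> S \<longrightarrow> y a = 0" using xout by (simp add: y_def)
  have T1: "(\<Sum>b\<in>S. y b * pS S x b) = - y v"
  proof -
    have "(\<Sum>b\<in>S. y b * pS S x b) = (\<Sum>b\<in>S. if b = v then - y b else 0)"
      using dualS_eq[OF S] by (intro sum.cong refl) (simp add: x_def)
    also have "\<dots> = - y v" using fS v by simp
    finally show ?thesis .
  qed
  have T2: "(\<Sum>b\<in>S. y b * pS S z b) \<le> 0"
    unfolding pS_def sum_distrib_left
  proof (intro sum_nonpos)
    fix b a
    show "y b * (z a * inter Adj e a b) \<le> 0"
    proof (cases "a = b")
      case True
      then have "y b * z a = 0" by (auto simp: y_def z_def)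
      then show ?thesis by (metis mult.assoc mult_zero_left order_refl)
    next
      case False
      then have "inter Adj e a b \<ge> 0" by (simp add: inter_def)
      moreover have "y b \<le> 0" "z a \<ge> 0" by (auto simp: y_def z_def)
      ultimately show ?thesis by (simp add: mult_nonpos_nonneg)
    qed
  qed
  have "form V Adj e y y = (\<Sum>b\<in>S. y b * pS S y b)"
  proof -
    have "form V Adj e y y = (\<Sum>b\<in>V. y b * pS S y b)" by (simp add: form_eq pS_supp[OF S yout])
    also have "\<dots> = (\<Sum>b\<in>S. y b * pS S y b)"
      using S finV yout by (intro sum.mono_neutral_right) auto
    finally show ?thesis .
  qed
  also have "(\<Sum>b\<in>S. y b * pS S y b) = (\<Sum>b\<in>S. y b * pS S x b) - (\<Sum>b\<in>S. y b * pS S z b)"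
    by (simp add: xyz pS_add sum_subtractf[symmetric] distrib_left)
  finally have "form V Adj e y y \<ge> - y v" using T1 T2 by simp
  moreover have "y v \<le> 0" by (simp add: y_def)
  ultimately have "\<not> form V Adj e y y < 0" by simp
  then have "\<forall>a\<in>V. y a = 0" using negdef by (auto simp: neg_definite_def)
  then show ?thesis
    using xout S by (cases "w \<in> V") (auto simp: y_def x_def min_def split: if_splits)
qed

lemma dualS_self_pos:
  assumes S: "S \<subseteq> V" and v: "v \<in> S"
  shows "dualS S v v > 0"
proof (rule ccontr)
  assume "\<not> dualS S v v > 0"
  then have z: "dualS S v v = 0" using dualS_nonneg[OF S v, of v] by simp
  have "pS S (dualS S v) v = (\<Sum>a\<in>{a\<in>S. Adj a v}. dualS S v a)"
    using pS_expand[OF S v] z by simp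
  also have "\<dots> \<ge> 0" using dualS_nonneg[OF S v] by (intro sum_nonneg) auto
  finally show False using dualS_eq[OF S v, of v] by simp
qed

lemma connected_in_sym:
  assumes "connected_in S Adj a b" shows "connected_in S Adj b a"
  using assms unfolding connected_in_def
proof (induction rule: rtranclp_induct)
  case base then show ?case by simp
next
  case (step y z)
  then have "(\<lambda>a b. a \<in> S \<and> b \<in> S \<and> Adj a b) z y" using adj_sym by auto
  then show ?case using step.IH by (rule converse_rtranclp_into_rtranclp)
qed

lemma dualS_pos:
  assumes S: "S \<subseteq> V" and v: "v \<in> S" and w: "w \<in> S"
    and conn: "connected_in S Adj w v"
  shows "dualS S v w > 0"
proof (rule ccontr)
  let ?x = "dualS S v"
  assume "\<not> ?x w > 0"
  then have z: "?x w = 0" using dualS_nonneg[OF S v, of w] by simp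
  have "connected_in S Adj w b \<Longrightarrow> ?x b = 0" for b
    unfolding connected_in_def
  proof (induction rule: rtranclp_induct)
    case base then show ?case by (rule z)
  next
    case (step b c)
    then have b: "b \<in> S" "c \<in> S" "Adj b c" by auto
    have "b \<noteq> v" using dualS_self_pos[OF S v] step.IH by auto
    then have "0 = pS S ?x b" using dualS_eq[OF S b(1)] by simp
    also have "\<dots> = (\<Sum>a\<in>{a\<in>S. Adj a b}. ?x a)" using pS_expand[OF S b(1)] step.IH by simp
    finally have "(\<Sum>a\<in>{a\<in>S. Adj a b}. ?x a) = 0" by simp
    moreover have "finite {a\<in>S. Adj a b}" by (rule finite_subset[of _ V]) (use S finV in auto)
    ultimately have "\<forall>a\<in>{a\<in>S. Adj a b}. ?x a = 0"
      using sum_nonneg_eq_0_iff dualS_nonneg[OF S v] by blast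
    then show ?case using b adj_sym by auto
  qed
  then have "?x v = 0" using conn by blast
  then show False using dualS_self_pos[OF S v] by simp
qed

lemma dualS_sym:
  assumes S: "S \<subseteq> V" and v: "v \<in> S" and w: "w \<in> S"
  shows "dualS S v w = dualS S w v"
proof -
  have fS: "finite S" using assms finV finite_subset by blast
  let ?X = "dualS S v" and ?Y = "dualS S w"
  have "(\<Sum>b\<in>S. ?X b * pS S ?Y b) = - ?X w"
  proof -
    have "(\<Sum>b\<in>S. ?X b * pS S ?Y b) = (\<Sum>b\<in>S. if b = w then - ?X b else 0)"
      using dualS_eq[OF S] by (intro sum.cong refl) simp
    also have "\<dots> = - ?X w" using fS w by simp
    finally show ?thesis .
  qed
  moreover have "(\<Sum>b\<in>S. ?Y b * pS S ?X b) = - ?Y v"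
  proof -
    have "(\<Sum>b\<in>S. ?Y b * pS S ?X b) = (\<Sum>b\<in>S. if b = v then - ?Y b else 0)"
      using dualS_eq[OF S] by (intro sum.cong refl) simp
    also have "\<dots> = - ?Y v" using fS v by simp
    finally show ?thesis .
  qed
  moreover have "(\<Sum>b\<in>S. ?X b * pS S ?Y b) = (\<Sum>b\<in>S. ?Y b * pS S ?X b)"
    unfolding pS_def sum_distrib_left
    by (subst sum.swap) (simp add: inter_sym mult_ac)
  ultimately show ?thesis by simp
qed

end


context plumb begin

lemma pS_out:
  assumes "S \<subseteq> V" "b \<notin> S"
  shows "pS S x b = (\<Sum>a\<in>{a\<in>S. Adj a b}. x a)"
proof -
  have fS: "finite S" using assms finV finite_subset by blast
  have "pS S x b = (\<Sum>a\<in>S. if Adj a b then x a else 0)"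
    unfolding pS_def using assms by (intro sum.cong refl) (auto simp: inter_def)
  also have "\<dots> = (\<Sum>a\<in>{a\<in>S. Adj a b}. x a)"
    by (rule sum.inter_filter[symmetric]) (use fS in simp)
  finally show ?thesis .
qed

lemma pS_lin:
  assumes "finite W"
  shows "pS S (\<lambda>a. \<Sum>w\<in>W. c w * f w a) b = (\<Sum>w\<in>W. c w * pS S (f w) b)"
  unfolding pS_def sum_distrib_left sum_distrib_right
  by (subst sum.swap) (simp add: mult_ac)

definition coef :: "'v set \<Rightarrow> 'v \<Rightarrow> 'v \<Rightarrow> rat" where
  "coef V2 v w = (if v \<in> V2 then (if w = v then 1 else 0)
      else (\<Sum>a\<in>{a\<in>V - V2. Adj a w}. dualS (V - V2) v a))"

lemma coef_nonneg: "v \<in> V \<Longrightarrow> coef V2 v w \<ge> 0"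
  unfolding coef_def using dualS_nonneg[of "V - V2" v]
  by (auto intro: sum_nonneg)

lemma decomp:
  assumes V2: "V2 \<subseteq> V" and v: "v \<in> V" "v \<notin> V2"
  shows "dualS V v = (\<lambda>b. dualS (V - V2) v b + (\<Sum>w\<in>V2. coef V2 v w * dualS V w b))"
proof -
  let ?R = "V - V2"
  let ?phi = "dualS ?R v"
  have R: "?R \<subseteq> V" by auto
  have fV2: "finite V2" using V2 finV finite_subset by blast
  have phiout: "\<forall>a. a \<notin> ?R \<longrightarrow> ?phi a = 0" using dualS_out[OF R] by blast
  show ?thesis
  proof (rule dualS_unique[symmetric, OF subset_refl])
    show "\<forall>b. b \<notin> V \<longrightarrow> dualS ?R v b + (\<Sum>w\<in>V2. coef V2 v w * dualS V w b) = 0"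
      using phiout dualS_out[OF subset_refl] by simp
    show "\<forall>b\<in>V. pS V (\<lambda>b. dualS ?R v b + (\<Sum>w\<in>V2. coef V2 v w * dualS V w b)) b = (if b = v then - 1 else 0)"
    proof
      fix b assume b: "b \<in> V"
      have "pS V (\<lambda>b. dualS ?R v b + (\<Sum>w\<in>V2. coef V2 v w * dualS V w b)) b
          = pS ?R ?phi b + (\<Sum>w\<in>V2. coef V2 v w * (if b = w then -1 else 0))"
        using dualS_eq[OF subset_refl b] by (simp add: pS_add pS_lin[OF fV2] pS_supp[OF R phiout])
      also have "\<dots> = (if b = v then - 1 else 0)"
      proof (cases "b \<in> V2")
        case True
        have "pS ?R ?phi b = coef V2 v b"
          using pS_out[OF R] True v by (simp add: coef_def)
        then show ?thesis using True v fV2 by (simp add: if_distrib[of "\<lambda>x. _ * x"] cong: if_cong) auto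
      next
        case False
        then have "b \<in> ?R" using b by simp
        then show ?thesis using dualS_eq[OF R] False by (auto intro!: sum.neutral)
      qed
      finally show "pS V (\<lambda>b. dualS ?R v b + (\<Sum>w\<in>V2. coef V2 v w * dualS V w b)) b = (if b = v then - 1 else 0)" .
    qed
  qed
qed

lemma restr_dual:
  assumes V2: "V2 \<subseteq> V" and v: "v \<in> V" and b: "b \<in> V2"
  shows "dualS V v b = (\<Sum>w\<in>V2. coef V2 v w * dualS V w b)"
proof (cases "v \<in> V2")
  case True
  have fV2: "finite V2" using V2 finV finite_subset by blast
  have "(\<Sum>w\<in>V2. coef V2 v w * dualS V w b) = (\<Sum>w\<in>V2. if w = v then dualS V w b else 0)"
    using True by (intro sum.cong) (auto simp: coef_def)
  then show ?thesis using True fV2 by simp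
next
  case False
  have "dualS (V - V2) v b = 0" using dualS_out[of "V - V2"] b by auto
  then show ?thesis using decomp[OF V2 v False] by simp
qed

lemma dual_comb_unique:
  assumes V2: "V2 \<subseteq> V" and eq: "dual_comb V Adj e V2 r = dual_comb V Adj e V2 r'"
  shows "\<forall>v\<in>V2. r v = r' v"
proof -
  have fV2: "finite V2" using V2 finV finite_subset by blast
  define s where "s v = r v - r' v" for v
  define y where "y b = (\<Sum>v\<in>V2. s v * dualS V v b)" for b
  have y0: "y b = 0" if "b \<in> V2" for b
  proof -
    have "(\<Sum>v\<in>V2. r v * dualS V v b) = (\<Sum>v\<in>V2. r' v * dualS V v b)"
      using fun_cong[OF eq, of b] that by (simp add: dual_comb_def restr_def Edual_eq)
    then show ?thesis by (simp add: y_def s_def left_diff_distrib sum_subtractf)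
  qed
  have py: "pS V y b = - (if b \<in> V2 then s b else 0)" if "b \<in> V" for b
  proof -
    have "pS V y b = (\<Sum>v\<in>V2. s v * (if b = v then -1 else 0))"
      unfolding y_def pS_lin[OF fV2] using dualS_eq[OF subset_refl that] by simp
    also have "\<dots> = - (if b \<in> V2 then s b else 0)" using fV2 by (simp add: if_distrib cong: if_cong)
    finally show ?thesis .
  qed
  have "form V Adj e y y = (\<Sum>b\<in>V. y b * pS V y b)" by (rule form_eq)
  also have "\<dots> = 0" using py y0 by (intro sum.neutral) auto
  finally have "\<forall>a\<in>V. y a = 0" using negdef by (auto simp: neg_definite_def)
  then have p0: "pS V y b = 0" for b by (simp add: pS_def)
  show ?thesis
  proof
    fix v assume v: "v \<in> V2"
    then have "v \<in> V" using V2 by auto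
    then have "s v = 0" using py[of v] p0[of v] v by simp
    then show "r v = r' v" by (simp add: s_def)
  qed
qed

lemma partA:
  assumes V2: "V2 \<subseteq> V" and m: "m \<in> Zred_support V Adj e V2"
  shows "\<exists>r. (\<forall>v\<in>V2. r v \<ge> 0) \<and> m = dual_comb V Adj e V2 r \<and>
            (\<forall>r'. (\<forall>v\<in>V2. r' v \<ge> 0) \<and> m = dual_comb V Adj e V2 r' \<longrightarrow> (\<forall>v\<in>V2. r' v = r v))"
proof -
  have "exps V Adj e V2 m \<noteq> {}"
    using m by (auto simp: Zred_support_def Zred_coeff_def)
  then obtain k where k: "k \<in> exps V Adj e V2 m" by blast
  then have m_eq: "m = restr V2 (\<lambda>w. \<Sum>v\<in>V. of_nat (k v) * Edual V Adj e v w)"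
    by (simp add: exps_def)
  have fV2: "finite V2" using V2 finV finite_subset by blast
  define r where "r w = (\<Sum>v\<in>V. of_nat (k v) * coef V2 v w)" for w
  have rnn: "\<forall>v\<in>V2. r v \<ge> 0" unfolding r_def using coef_nonneg by (auto intro!: sum_nonneg)
  have "m = dual_comb V Adj e V2 r"
  proof
    fix b
    show "m b = dual_comb V Adj e V2 r b"
    proof (cases "b \<in> V2")
      case True
      have "m b = (\<Sum>v\<in>V. of_nat (k v) * (\<Sum>w\<in>V2. coef V2 v w * dualS V w b))"
        using True V2 restr_dual[OF V2 _ True] by (simp add: m_eq restr_def Edual_eq)
      also have "\<dots> = (\<Sum>w\<in>V2. r w * dualS V w b)"
        unfolding r_def sum_distrib_left sum_distrib_right
        by (subst sum.swap) (simp add: mult_ac)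
      finally show ?thesis using True by (simp add: dual_comb_def restr_def Edual_eq)
    next
      case False then show ?thesis by (simp add: m_eq dual_comb_def restr_def)
    qed
  qed
  moreover have "\<forall>r'. (\<forall>v\<in>V2. r' v \<ge> 0) \<and> m = dual_comb V Adj e V2 r' \<longrightarrow> (\<forall>v\<in>V2. r' v = r v)"
    using dual_comb_unique[OF V2] calculation by metis
  ultimately show ?thesis using rnn by blast
qed

end


context plumb begin

definition Pr :: "'v set \<Rightarrow> ('v \<times> 'v) set" where
  "Pr Y = {(c,d). c \<in> Y \<and> d \<in> Y \<and> Adj c d}"

lemma Pr_finite: "Y \<subseteq> V \<Longrightarrow> finite (Pr Y)"
  by (rule finite_subset[of _ "V \<times> V"]) (auto simp: Pr_def finV)

lemma conn_mem: "connected_in S Adj x y \<Longrightarrow> x \<in> S \<Longrightarrow> y \<in> S"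
  unfolding connected_in_def by (induction rule: rtranclp_induct) auto

lemma conn_trans: "connected_in S Adj x y \<Longrightarrow> connected_in S Adj y z \<Longrightarrow> connected_in S Adj x z"
  unfolding connected_in_def by (rule rtranclp_trans)

lemma conn_step: "x \<in> S \<Longrightarrow> y \<in> S \<Longrightarrow> Adj x y \<Longrightarrow> connected_in S Adj x y"
  unfolding connected_in_def by auto

lemma conn_mono: "connected_in S Adj x y \<Longrightarrow> S \<subseteq> T \<Longrightarrow> connected_in T Adj x y"
  unfolding connected_in_def by (induction rule: rtranclp_induct) (auto intro: rtranclp.rtrancl_into_rtrancl)

lemma exit_edge:
  assumes "connected_in S Adj c d" "c \<in> Y" "d \<notin> Y"
  shows "\<exists>y z. y \<in> Y \<and> y \<in> S \<and> z \<in> S \<and> z \<notin> Y \<and> Adj y z"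
  using assms unfolding connected_in_def
proof (induction rule: rtranclp_induct)
  case base then show ?case by simp
next
  case (step b d)
  show ?case
  proof (cases "b \<in> Y")
    case True then show ?thesis using step by blast
  next
    case False then show ?thesis using step by blast
  qed
qed

lemma grow:
  assumes fS: "finite S" and SV: "S \<subseteq> V" and conn: "\<forall>a\<in>S. \<forall>b\<in>S. connected_in S Adj a b"
    and X: "X \<subseteq> S" "X \<noteq> {}"
  shows "card (Pr S) \<ge> card (Pr X) + 2 * card (S - X)"
  using X
proof (induction "card (S - X)" arbitrary: X rule: less_induct)
  case less
  show ?case
  proof (cases "S - X = {}")
    case True
    then have "S = X" using less.prems by auto
    then show ?thesis by simp
  next
    case False
    then obtain d where d: "d \<in> S" "d \<notin> X" by auto
    obtain c where c: "c \<in> X" using less.prems by auto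
    then have "c \<in> S" using less.prems by auto
    then have "connected_in S Adj c d" using conn d by auto
    then obtain y z where yz: "y \<in> X" "z \<in> S" "z \<notin> X" "Adj y z"
      using exit_edge c d by blast
    let ?X = "insert z X"
    have X': "?X \<subseteq> S" "?X \<noteq> {}" using yz less.prems by auto
    have cardlt: "card (S - ?X) < card (S - X)"
      using fS yz by (intro psubset_card_mono) blast+
    have c1: "card (S - X) = Suc (card (S - ?X))"
    proof -
      have eq: "S - X = insert z (S - ?X)" using yz by auto
      have "card (insert z (S - ?X)) = Suc (card (S - ?X))"
        using fS by (intro card_insert_disjoint) auto
      then show ?thesis unfolding eq .
    qed
    have IH: "card (Pr S) \<ge> card (Pr ?X) + 2 * card (S - ?X)"
      using less.hyps[OF cardlt X'] .
    have yzne: "y \<noteq> z" using yz by auto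
    have zy: "Adj z y" using yz(4) by (rule adj_sym)
    have yS: "y \<in> S" using yz less.prems by auto
    have sub: "Pr X \<union> {(y,z),(z,y)} \<subseteq> Pr ?X"
      using yz zy by (auto simp: Pr_def)
    have disj: "Pr X \<inter> {(y,z),(z,y)} = {}" using yz by (auto simp: Pr_def)
    have fPX: "finite (Pr X)" using less.prems SV by (intro Pr_finite) auto
    have "card (Pr X) + 2 = card (Pr X \<union> {(y,z),(z,y)})"
      using fPX disj yzne by (simp add: card_Un_disjoint)
    also have "\<dots> \<le> card (Pr ?X)"
    proof (rule card_mono[OF _ sub])
      show "finite (Pr ?X)" using X' SV by (intro Pr_finite) auto
    qed
    finally show ?thesis using IH c1 by simp
  qed
qed

lemma Pr_single: "card (Pr {w}) = 0"
proof -
  have "Pr {w} = {}" using adj_irr by (auto simp: Pr_def)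
  then show ?thesis by simp
qed

lemma grow1:
  assumes fS: "finite S" and SV: "S \<subseteq> V" and conn: "\<forall>a\<in>S. \<forall>b\<in>S. connected_in S Adj a b"
    and ne: "S \<noteq> {}"
  shows "card (Pr S) + 2 \<ge> 2 * card S"
proof -
  obtain w where w: "w \<in> S" using ne by auto
  have "card (Pr S) \<ge> card (Pr {w}) + 2 * card (S - {w})"
    using grow[OF fS SV conn, of "{w}"] w by auto
  moreover have "card S = Suc (card (S - {w}))" using card_Suc_Diff1[OF fS w] by simp
  ultimately show ?thesis by (simp add: Pr_single)
qed

lemma Pr_V: "card (Pr V) = 2 * card (edges_of Adj)"
proof -
  define A where "A E = {(c,d). Adj c d \<and> {c,d} = E}" for E
  have fE: "finite (edges_of Adj)"
  proof -
    have "edges_of Adj \<subseteq> Pow V" using adjV by (auto simp: edges_of_def)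
    then show ?thesis using finV finite_subset by blast
  qed
  have "Pr V = (\<Union>E\<in>edges_of Adj. A E)"
    using adjV by (auto simp: Pr_def A_def edges_of_def)
  moreover have "card (\<Union>E\<in>edges_of Adj. A E) = (\<Sum>E\<in>edges_of Adj. card (A E))"
  proof (rule card_UN_disjoint[OF fE])
    show "\<forall>i\<in>edges_of Adj. finite (A i)"
    proof
      fix E assume "E \<in> edges_of Adj"
      have "A E \<subseteq> V \<times> V" using adjV by (auto simp: A_def)
      then show "finite (A E)" using finV finite_subset by blast
    qed
    show "\<forall>i\<in>edges_of Adj. \<forall>j\<in>edges_of Adj. i \<noteq> j \<longrightarrow> A i \<inter> A j = {}"
      by (auto simp: A_def)
  qed
  moreover have "card (A E) = 2" if EE: "E \<in> edges_of Adj" for E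
  proof -
    obtain a b where ab: "E = {a,b}" "Adj a b" using EE unfolding edges_of_def by blast
    have "a \<noteq> b" using ab adj_irr by auto
    have ba: "Adj b a" using ab(2) by (rule adj_sym)
    have "A E = {(a,b),(b,a)}" using ab ba by (auto simp: A_def doubleton_eq_iff)
    then show ?thesis using \<open>a \<noteq> b\<close> by simp
  qed
  ultimately show ?thesis by simp
qed

definition compo :: "'v set \<Rightarrow> 'v \<Rightarrow> 'v set" where
  "compo R a = {c. connected_in R Adj a c}"

lemma compo_sub: "a \<in> R \<Longrightarrow> compo R a \<subseteq> R"
  using conn_mem by (auto simp: compo_def)

lemma compo_closed:
  assumes "c \<in> compo R a" "d \<in> R" "c \<in> R" "Adj c d"
  shows "d \<in> compo R a"
proof -
  have "connected_in R Adj a c" using assms(1) by (simp add: compo_def)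
  moreover have "connected_in R Adj c d" by (rule conn_step[OF assms(3) assms(2) assms(4)])
  ultimately have "connected_in R Adj a d" by (rule conn_trans)
  then show ?thesis by (simp add: compo_def)
qed

lemma compo_path:
  assumes "connected_in R Adj c d" "c \<in> compo R a"
  shows "connected_in (compo R a) Adj c d"
  using assms unfolding connected_in_def
proof (induction rule: rtranclp_induct)
  case base then show ?case by simp
next
  case (step b d)
  have cb: "connected_in (compo R a) Adj c b" using step.IH step.prems by (simp add: connected_in_def)
  have bK: "b \<in> compo R a" by (rule conn_mem[OF cb step.prems])
  have bd: "b \<in> R" "d \<in> R" "Adj b d" using step.hyps(2) by auto
  have dK: "d \<in> compo R a" by (rule compo_closed[OF bK bd(2) bd(1) bd(3)])
  have "connected_in (compo R a) Adj b d" by (rule conn_step[OF bK dK bd(3)])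
  then have "connected_in (compo R a) Adj c d" by (rule conn_trans[OF cb])
  then show ?case by (simp add: connected_in_def)
qed

lemma compo_conn:
  assumes "c \<in> compo R a" "d \<in> compo R a"
  shows "connected_in (compo R a) Adj c d"
proof -
  have "connected_in R Adj a c" using assms(1) by (simp add: compo_def)
  then have "connected_in R Adj c a" by (rule connected_in_sym)
  moreover have "connected_in R Adj a d" using assms(2) by (simp add: compo_def)
  ultimately have "connected_in R Adj c d" by (rule conn_trans)
  then show ?thesis using compo_path assms(1) by blast
qed

lemma compo_self: "a \<in> compo R a"
  by (simp add: compo_def connected_in_def)

end


context plumb begin
lemma no_two_attach:
  assumes V2: "V2 \<subseteq> V" and c2: "is_connected V2 Adj"
    and a: "a \<in> V - V2" and ab: "connected_in (V - V2) Adj a b"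
    and w: "w1 \<in> V2" "w2 \<in> V2" "Adj a w1" "Adj b w2"
  shows "w1 = w2"
proof (rule ccontr)
  assume ne: "w1 \<noteq> w2"
  let ?R = "V - V2"
  let ?K = "compo ?R a"
  have KR: "?K \<subseteq> ?R" using compo_sub a by blast
  have aK: "a \<in> ?K" by (rule compo_self)
  have bK: "b \<in> ?K" using ab by (simp add: compo_def)
  have fK: "finite ?K" using KR finV finite_subset by blast
  have fV2: "finite V2" using V2 finV finite_subset by blast
  have KV: "?K \<subseteq> V" using KR by auto
  have PK: "card (Pr ?K) + 2 \<ge> 2 * card ?K"
    using grow1[OF fK KV] compo_conn aK by blast
  have PV2: "card (Pr V2) + 2 \<ge> 2 * card V2"
    using grow1[OF fV2 V2] c2 by (auto simp: is_connected_def)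
  let ?X = "V2 \<union> ?K"
  have disjVK: "V2 \<inter> ?K = {}" using KR by auto
  let ?N = "{(a,w1),(w1,a),(b,w2),(w2,b)}"
  have sub: "Pr V2 \<union> Pr ?K \<union> ?N \<subseteq> Pr ?X"
  proof -
    have "Adj w1 a" "Adj w2 b" using adj_sym[OF w(3)] adj_sym[OF w(4)] by auto
    then show ?thesis using w aK bK by (auto simp: Pr_def)
  qed
  have "a \<notin> V2" "b \<notin> V2" using aK bK KR by auto
  then have d: "a \<noteq> w1" "a \<noteq> w2" "b \<noteq> w1" "b \<noteq> w2" using w by auto
  have cN: "card ?N = 4" using ne d by (simp add: card_insert_if)
  have d1: "Pr V2 \<inter> Pr ?K = {}" using disjVK by (auto simp: Pr_def)
  have d2: "(Pr V2 \<union> Pr ?K) \<inter> ?N = {}" using disjVK aK bK w by (auto simp: Pr_def)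
  have f1: "finite (Pr V2)" "finite (Pr ?K)" using V2 KV by (auto intro: Pr_finite)
  have "card (Pr V2) + card (Pr ?K) + 4 = card (Pr V2 \<union> Pr ?K \<union> ?N)"
  proof -
    have "card (Pr V2 \<union> Pr ?K) = card (Pr V2) + card (Pr ?K)"
      by (rule card_Un_disjoint) (use f1 d1 in auto)
    moreover have "card ((Pr V2 \<union> Pr ?K) \<union> ?N) = card (Pr V2 \<union> Pr ?K) + card ?N"
      by (rule card_Un_disjoint) (use f1 d2 in auto)
    ultimately show ?thesis using cN by simp
  qed
  also have "\<dots> \<le> card (Pr ?X)" using sub V2 KV by (intro card_mono Pr_finite) auto
  finally have PX: "card (Pr V2) + card (Pr ?K) + 4 \<le> card (Pr ?X)" .
  have cX: "card ?X = card V2 + card ?K" using fV2 fK disjVK by (simp add: card_Un_disjoint)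
  have XV: "?X \<subseteq> V" using V2 KV by auto
  have "card (Pr V) \<ge> card (Pr ?X) + 2 * card (V - ?X)"
    using grow[OF finV subset_refl _ XV] connV w by (auto simp: is_connected_def)
  moreover have "card V = card ?X + card (V - ?X)"
    using finV XV by (metis card_Un_disjoint Diff_disjoint Un_Diff_cancel Un_absorb1 finite_Diff finite_subset)
  ultimately have "card (Pr V) \<ge> 2 * card V" using PX PK PV2 cX by linarith
  moreover have "card V \<ge> 1" using w V2 finV card_0_eq by fastforce
  ultimately show False using Pr_V card_edges by linarith
qed

end


context plumb begin

lemma dualS_compo:
  assumes S: "S \<subseteq> V" and v: "v \<in> S" and d: "d \<notin> compo S v"
  shows "dualS S v d = 0"
proof -
  let ?phi = "dualS S v"
  let ?K = "compo S v"
  define psi where "psi a = (if a \<in> ?K then ?phi a else 0)" for a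
  have fS: "finite S" using S finV finite_subset by blast
  have vK: "v \<in> ?K" by (rule compo_self)
  have "psi = ?phi"
  proof (rule dualS_unique[OF S])
    show "\<forall>w. w \<notin> S \<longrightarrow> psi w = 0" using dualS_out[OF S] by (simp add: psi_def)
    show "\<forall>w\<in>S. pS S psi w = (if w = v then - 1 else 0)"
    proof
      fix b assume b: "b \<in> S"
      show "pS S psi b = (if b = v then - 1 else 0)"
      proof (cases "b \<in> ?K")
        case True
        have "pS S psi b = pS S ?phi b"
          unfolding pS_def
        proof (intro sum.cong refl)
          fix a assume a: "a \<in> S"
          show "psi a * inter Adj e a b = ?phi a * inter Adj e a b"
          proof (cases "a \<in> ?K")
            case False
            have "a \<noteq> b" using False True by auto
            moreover have "\<not> Adj a b"
            proof
              assume "Adj a b"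
              then have "Adj b a" by (rule adj_sym)
              then have "a \<in> ?K" using compo_closed[OF True a b] by simp
              with False show False by simp
            qed
            ultimately show ?thesis by (simp add: inter_def)
          qed (simp add: psi_def)
        qed
        then show ?thesis using dualS_eq[OF S b] by simp
      next
        case False
        have "b \<noteq> v" using False vK by auto
        have "pS S psi b = 0"
          unfolding pS_def
        proof (intro sum.neutral ballI)
          fix a assume a: "a \<in> S"
          show "psi a * inter Adj e a b = 0"
          proof (cases "a \<in> ?K")
            case True
            have "a \<noteq> b" using False True by auto
            moreover have "\<not> Adj a b"
            proof
              assume "Adj a b"
              then have "b \<in> ?K" using compo_closed[OF True b a] by simp
              with False show False by simp
            qed
            ultimately show ?thesis by (simp add: inter_def)
          qed (simp add: psi_def)
        qed
        then show ?thesis using \<open>b \<noteq> v\<close> by simp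
      qed
    qed
  qed
  then show ?thesis using d by (metis psi_def)
qed

lemma conn_V: "a \<in> V \<Longrightarrow> b \<in> V \<Longrightarrow> connected_in V Adj a b"
  using connV by (simp add: is_connected_def)

lemma dual_pos: "u \<in> V \<Longrightarrow> w \<in> V \<Longrightarrow> dualS V u w > 0"
  using dualS_pos[OF subset_refl] conn_V by blast

end

locale bnd = plumb V Adj e for V :: "'v set" and Adj e +
  fixes V2 :: "'v set" and u :: 'v
  assumes V2: "V2 \<subseteq> V" and c2: "is_connected V2 Adj"
    and ub: "u \<in> boundary V Adj V2" and deg2: "card {w\<in>V2. Adj u w} \<ge> 2"
begin

abbreviation "R \<equiv> V - V2"
abbreviation "V1u \<equiv> V1 V Adj V2 u"
abbreviation "x \<equiv> dualS V u"

lemma uV2: "u \<in> V2" using ub by (simp add: boundary_def)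
lemma uV: "u \<in> V" using uV2 V2 by auto

lemma V1_cases:
  assumes "v \<in> V1u" "v \<noteq> u"
  shows "v \<in> R \<and> (\<exists>y\<in>R. Adj u y \<and> connected_in R Adj y v)"
  using assms conn_mem by (auto simp: V1_def)

lemma V1_sub: "V1u \<subseteq> V"
  using V1_cases uV by blast

lemma V1_V2: "v \<in> V1u \<Longrightarrow> v \<in> V2 \<Longrightarrow> v = u"
  using V1_cases by blast

lemma uV1: "u \<in> V1u" by (simp add: V1_def)

lemma fin_V1: "finite V1u" using V1_sub finV finite_subset by blast

lemma V1_nbr:
  assumes k: "k \<in> V1u" "k \<noteq> u" and kw: "Adj k w"
  shows "w \<in> V1u"
proof -
  obtain y where y: "y \<in> R" "Adj u y" "connected_in R Adj y k" using V1_cases[OF k] by blast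
  have kR: "k \<in> R" using V1_cases[OF k] by blast
  have wV: "w \<in> V" using adjV[OF kw] by simp
  show ?thesis
  proof (cases "w \<in> V2")
    case True
    have "Adj y u" using y(2) by (rule adj_sym)
    then have "u = w" using no_two_attach[OF V2 c2 y(1) y(3) uV2 True _ kw] by simp
    then show ?thesis using uV1 by simp
  next
    case False
    then have "w \<in> R" using wV by simp
    then have "connected_in R Adj k w" using conn_step[OF kR _ kw] by simp
    then have "connected_in R Adj y w" using y(3) conn_trans by blast
    then show ?thesis using y by (auto simp: V1_def)
  qed
qed

lemma coef_u_out:
  assumes v: "v \<in> V" "v \<notin> V1u"
  shows "coef V2 v u = 0"
proof (cases "v \<in> V2")
  case True
  then have "v \<noteq> u" using v uV1 by auto
  then show ?thesis using True by (simp add: coef_def)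
next
  case False
  have vR: "v \<in> R" using v False by simp
  have "(\<Sum>a\<in>{a\<in>R. Adj a u}. dualS R v a) = 0"
  proof (intro sum.neutral ballI)
    fix a assume a: "a \<in> {a\<in>R. Adj a u}"
    show "dualS R v a = 0"
    proof (rule dualS_compo[of R], simp, rule vR, rule notI)
      assume "a \<in> compo R v"
      then have "connected_in R Adj v a" by (simp add: compo_def)
      then have "connected_in R Adj a v" by (rule connected_in_sym)
      moreover have "Adj u a" using a adj_sym by blast
      ultimately have "v \<in> V1u" using a by (auto simp: V1_def)
      with v show False by simp
    qed
  qed
  then show ?thesis using False by (simp add: coef_def)
qed

lemma coef_in_other:
  assumes v: "v \<in> V1u" and w: "w \<in> V2" "w \<noteq> u"
  shows "coef V2 v w = 0"
proof (cases "v = u")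
  case True
  then show ?thesis using w uV2 by (simp add: coef_def)
next
  case False
  obtain y where y: "y \<in> R" "Adj u y" "connected_in R Adj y v" using V1_cases[OF v False] by blast
  have vR: "v \<in> R" using V1_cases[OF v False] by blast
  have "(\<Sum>a\<in>{a\<in>R. Adj a w}. dualS R v a) = 0"
  proof (intro sum.neutral ballI)
    fix a assume a: "a \<in> {a\<in>R. Adj a w}"
    show "dualS R v a = 0"
    proof (rule dualS_compo[of R], simp, rule vR, rule notI)
      assume "a \<in> compo R v"
      then have "connected_in R Adj v a" by (simp add: compo_def)
      then have ya: "connected_in R Adj y a" using y(3) conn_trans by blast
      have "Adj y u" using y(2) by (rule adj_sym)
      then have "u = w" using no_two_attach[OF V2 c2 y(1) ya uV2 w(1)] a by blast
      with w show False by simp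
    qed
  qed
  then show ?thesis using vR by (simp add: coef_def)
qed

lemma coef_in_u:
  assumes v: "v \<in> V1u"
  shows "coef V2 v u = x v / x u"
proof -
  have vV: "v \<in> V" using v V1_sub by auto
  have xu: "x u > 0" using dual_pos[OF uV uV] .
  have fV2: "finite V2" using V2 finV finite_subset by blast
  have "dualS V v u = (\<Sum>w\<in>V2. coef V2 v w * dualS V w u)"
    by (rule restr_dual[OF V2 vV uV2])
  also have "\<dots> = (\<Sum>w\<in>V2. if w = u then coef V2 v u * dualS V u u else 0)"
    using coef_in_other[OF v] by (intro sum.cong refl) auto
  also have "\<dots> = coef V2 v u * x u" using fV2 uV2 by simp
  finally have "coef V2 v u * x u = x v" using dualS_sym[OF subset_refl vV uV] by simp
  then show ?thesis using xu by (simp add: field_simps)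
qed

end


lemma common_denom:
  fixes f :: "'a \<Rightarrow> rat"
  assumes "finite S"
  shows "\<exists>N::nat. N > 0 \<and> (\<forall>v\<in>S. \<exists>z::int. of_nat N * f v = of_int z)"
  using assms
proof (induction S rule: finite_induct)
  case empty then show ?case by (intro exI[of _ 1]) auto
next
  case (insert a S)
  obtain N where N: "N > 0" "\<forall>v\<in>S. \<exists>z::int. of_nat N * f v = of_int z" using insert by blast
  obtain p q where pq: "quotient_of (f a) = (p, q)" by (cases "quotient_of (f a)")
  have q: "q > 0" using pq quotient_of_denom_pos by blast
  have fa: "f a = of_int p / of_int q" using pq quotient_of_div by blast
  define M where "M = N * nat q"
  have "M > 0" using N q by (simp add: M_def)
  moreover have "\<forall>v\<in>insert a S. \<exists>z::int. of_nat M * f v = of_int z"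
  proof
    fix v assume v: "v \<in> insert a S"
    show "\<exists>z::int. of_nat M * f v = of_int z"
    proof (cases "v = a")
      case True
      have "of_nat M * f v = of_int (int N * p)"
        using True q fa by (simp add: M_def of_nat_mult)
      then show ?thesis by blast
    next
      case False
      then obtain z where z: "of_nat N * f v = of_int z" using N v by auto
      have "of_nat M * f v = of_int (q * z)"
        using q z by (simp add: M_def of_nat_mult mult_ac flip: z)
      then show ?thesis by blast
    qed
  qed
  ultimately show ?case by blast
qed

context plumb begin

definition Out :: "'v set \<Rightarrow> ('v \<times> 'v) set" where
  "Out K = {(c,d). c \<in> K \<and> d \<in> V \<and> d \<notin> K \<and> Adj c d}"

lemma Out_finite: "finite (Out K)"
  by (rule finite_subset[of _ "V \<times> V"]) (auto simp: Out_def finV dest: adjV)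

lemma degsum:
  assumes K: "K \<subseteq> V"
  shows "(\<Sum>v\<in>K. valency V Adj v) = card (Pr K) + card (Out K)"
proof -
  have fK: "finite K" using K finV finite_subset by blast
  have "(\<Sum>v\<in>K. valency V Adj v) = card (Sigma K (\<lambda>v. {w\<in>V. Adj v w}))"
    unfolding valency_def using fK finV by (subst card_SigmaI) auto
  also have "Sigma K (\<lambda>v. {w\<in>V. Adj v w}) = Pr K \<union> Out K"
    using K adjV by (auto simp: Pr_def Out_def)
  also have "card (Pr K \<union> Out K) = card (Pr K) + card (Out K)"
    by (rule card_Un_disjoint[OF Pr_finite[OF K] Out_finite]) (auto simp: Pr_def Out_def)
  finally show ?thesis .
qed

lemma harmonic:
  assumes N: "\<forall>v\<in>V. of_nat (g v) = of_nat N * dualS V u v" and u: "u \<in> V"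
    and k: "k \<in> V" "k \<noteq> u"
  shows "(\<Sum>a\<in>{a\<in>V. Adj a k}. g a) = nat (- e k) * g k"
proof -
  have "0 = pS V (dualS V u) k" using dualS_eq[OF subset_refl k(1)] k by simp
  also have "\<dots> = dualS V u k * of_int (e k) + (\<Sum>a\<in>{a\<in>V. Adj a k}. dualS V u a)"
    by (rule pS_expand[OF subset_refl k(1)])
  finally have "0 = of_nat N * (dualS V u k * of_int (e k) + (\<Sum>a\<in>{a\<in>V. Adj a k}. dualS V u a))"
    by simp
  also have "\<dots> = of_nat (g k) * of_int (e k) + (\<Sum>a\<in>{a\<in>V. Adj a k}. of_nat (g a))"
    using N k adjV by (simp add: distrib_left sum_distrib_left mult.assoc[symmetric])
  finally have "(of_nat (\<Sum>a\<in>{a\<in>V. Adj a k}. g a) :: rat) = of_nat (g k) * of_int (- e k)"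
    by (simp add: of_nat_sum)
  also have "\<dots> = of_nat (nat (- e k) * g k)" using e_neg[OF k(1)] by simp
  finally show ?thesis by (simp only: of_nat_eq_iff)
qed

end

context bnd begin

lemma zeta_sum:
  fixes \<zeta> :: complex
  assumes N: "\<forall>v\<in>V. of_nat (g v) = of_nat N * x v"
  shows "0 \<le> (\<Sum>v\<in>{v\<in>V1u. \<zeta> ^ g v = 1}. int (valency V Adj v) - 2)"
proof -
  define A where "A = {v\<in>V1u. \<zeta> ^ g v = 1}"
  have AV1: "A \<subseteq> V1u" by (auto simp: A_def)
  have AV: "A \<subseteq> V" using AV1 V1_sub by auto
  have fA: "finite A" using AV finV finite_subset by blast
  define C where "C = compo A ` A"
  have KA: "K \<subseteq> A" if "K \<in> C" for K using that compo_sub by (auto simp: C_def)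
  have UC: "\<Union>C = A" using compo_self by (auto simp: C_def dest: compo_sub)
  have fC: "finite C" using fA by (simp add: C_def)
  have disj: "\<forall>K\<in>C. \<forall>L\<in>C. K \<noteq> L \<longrightarrow> K \<inter> L = {}"
  proof (intro ballI impI)
    fix K L assume K: "K \<in> C" and L: "L \<in> C" and ne: "K \<noteq> L"
    obtain a b where a: "a \<in> A" "K = compo A a" and b: "b \<in> A" "L = compo A b"
      using K L by (auto simp: C_def)
    show "K \<inter> L = {}"
    proof (rule ccontr)
      assume "K \<inter> L \<noteq> {}"
      then obtain c where c: "connected_in A Adj a c" "connected_in A Adj b c"
        using a b by (auto simp: compo_def)
      have cb: "connected_in A Adj c b" using c(2) by (rule connected_in_sym)
      have ab: "connected_in A Adj a b" using c(1) cb by (rule conn_trans)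
      have ba: "connected_in A Adj b a" using ab by (rule connected_in_sym)
      have "compo A a = compo A b"
      proof
        show "compo A a \<subseteq> compo A b"
        proof
          fix d assume "d \<in> compo A a"
          then have "connected_in A Adj a d" by (simp add: compo_def)
          then have "connected_in A Adj b d" using ba conn_trans by blast
          then show "d \<in> compo A b" by (simp add: compo_def)
        qed
        show "compo A b \<subseteq> compo A a"
        proof
          fix d assume "d \<in> compo A b"
          then have "connected_in A Adj b d" by (simp add: compo_def)
          then have "connected_in A Adj a d" using ab conn_trans by blast
          then show "d \<in> compo A a" by (simp add: compo_def)
        qed
      qed
      with a b ne show False by simp
    qed
  qed
  have classnn: "0 \<le> (\<Sum>v\<in>K. int (valency V Adj v) - 2)" if KC: "K \<in> C" for K
  proof -
    obtain a where a: "a \<in> A" "K = compo A a" using KC by (auto simp: C_def)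
    have KA': "K \<subseteq> A" using KA[OF KC] .
    have KV: "K \<subseteq> V" using KA' AV by auto
    have fK: "finite K" using KV finV finite_subset by blast
    have aK: "a \<in> K" using a compo_self by simp
    have Kconn: "\<forall>c\<in>K. \<forall>d\<in>K. connected_in K Adj c d" using compo_conn a by blast
    have PK: "card (Pr K) + 2 \<ge> 2 * card K" using grow1[OF fK KV Kconn] aK by blast
    have OK: "card (Out K) \<ge> 2"
    proof (cases "u \<in> K")
      case True
      have "(\<lambda>w. (u,w)) ` {w\<in>V2. Adj u w} \<subseteq> Out K"
      proof
        fix p assume "p \<in> (\<lambda>w. (u,w)) ` {w\<in>V2. Adj u w}"
        then obtain w where w: "p = (u,w)" "w \<in> V2" "Adj u w" by auto
        have "w \<notin> K"
        proof
          assume "w \<in> K"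
          then have "w \<in> V1u" using KA' AV1 by auto
          then have "w = u" using V1_V2 w(2) by blast
          then show False using w(3) adj_irr by simp
        qed
        then show "p \<in> Out K" using w True V2 by (auto simp: Out_def)
      qed
      then have "card ((\<lambda>w. (u,w)) ` {w\<in>V2. Adj u w}) \<le> card (Out K)"
        by (intro card_mono Out_finite)
      moreover have "card ((\<lambda>w. (u,w)) ` {w\<in>V2. Adj u w}) = card {w\<in>V2. Adj u w}"
        by (rule card_image) (auto simp: inj_on_def)
      ultimately show ?thesis using deg2 by simp
    next
      case False
      have aV: "a \<in> V" using aK KV by auto
      obtain y z where yz: "y \<in> K" "y \<in> V" "z \<in> V" "z \<notin> K" "Adj y z"
        using exit_edge[OF conn_V[OF aV uV] aK False] by blast
      have yzO: "(y,z) \<in> Out K" using yz by (auto simp: Out_def)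
      show ?thesis
      proof (rule ccontr)
        assume "\<not> 2 \<le> card (Out K)"
        then have "card (Out K) \<le> Suc 0" by simp
        then have one: "\<forall>p\<in>Out K. \<forall>q\<in>Out K. p = q" using card_le_Suc0_iff_eq[OF Out_finite] by blast
        have yu: "y \<noteq> u" using yz False by auto
        let ?Ny = "{a\<in>V. Adj a y}"
        have fNy: "finite ?Ny" using finV by simp
        have zN: "z \<in> ?Ny" using yz adj_sym by blast
        have nK: "a' \<in> K" if "a' \<in> ?Ny" "a' \<noteq> z" for a'
        proof (rule ccontr)
          assume "a' \<notin> K"
          have "Adj y a'" using that adj_sym by blast
          then have "(y,a') \<in> Out K" using that \<open>a' \<notin> K\<close> yz by (auto simp: Out_def)
          then show False using one yzO that by blast
        qed
        have "\<zeta> ^ (\<Sum>a\<in>?Ny. g a) = (\<Prod>a\<in>?Ny. \<zeta> ^ g a)" by (rule power_sum)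
        also have "\<dots> = \<zeta> ^ g z * (\<Prod>a\<in>?Ny - {z}. \<zeta> ^ g a)"
          using fNy zN by (simp add: prod.remove)
        also have "(\<Prod>a\<in>?Ny - {z}. \<zeta> ^ g a) = 1"
        proof (intro prod.neutral ballI)
          fix a' assume "a' \<in> ?Ny - {z}"
          then have "a' \<in> A" using nK KA' by blast
          then show "\<zeta> ^ g a' = 1" by (simp add: A_def)
        qed
        finally have "\<zeta> ^ (\<Sum>a\<in>?Ny. g a) = \<zeta> ^ g z" by simp
        moreover have "\<zeta> ^ (\<Sum>a\<in>?Ny. g a) = 1"
        proof -
          have "(\<Sum>a\<in>?Ny. g a) = nat (- e y) * g y" by (rule harmonic[OF N uV yz(2) yu])
          moreover have "\<zeta> ^ g y = 1" using yz(1) KA' by (auto simp: A_def)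
          ultimately show ?thesis by (simp add: power_mult[symmetric] mult.commute power_mult)
        qed
        ultimately have zz: "\<zeta> ^ g z = 1" by simp
        have "y \<in> V1u" using yz(1) KA' AV1 by auto
        then have "z \<in> V1u" using V1_nbr yu yz(5) by blast
        then have "z \<in> A" using zz by (simp add: A_def)
        then have "z \<in> K" using compo_closed[of y A a z] yz a KA' by blast
        with yz show False by simp
      qed
    qed
    have "(\<Sum>v\<in>K. int (valency V Adj v) - 2) = int (\<Sum>v\<in>K. valency V Adj v) - 2 * int (card K)"
      by (simp add: sum_subtractf of_nat_sum)
    also have "\<dots> = int (card (Pr K)) + int (card (Out K)) - 2 * int (card K)"
      using degsum[OF KV] by simp
    finally show ?thesis using PK OK by linarith
  qed
  have "(\<Sum>v\<in>A. int (valency V Adj v) - 2) = (\<Sum>K\<in>C. \<Sum>v\<in>K. int (valency V Adj v) - 2)"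
  proof -
    have fKs: "\<forall>K\<in>C. finite K" using KA fA finite_subset by blast
    show ?thesis unfolding UC[symmetric] using fC disj fKs by (subst sum.Union_disjoint) auto
  qed
  also have "\<dots> \<ge> 0" using classnn by (rule sum_nonneg)
  finally show ?thesis by (simp add: A_def)
qed

end


lemma of_rat_gchoose: "(of_rat (a gchoose k) :: complex) = (of_rat a) gchoose k"
proof -
  have f: "(of_rat (fact k) :: complex) = fact k" by (metis of_nat_fact of_rat_of_nat_eq)
  show ?thesis by (simp add: gbinomial_prod_rev of_rat_prod of_rat_divide of_rat_diff f)
qed

context plumb begin

lemma restr_coords:
  assumes V2: "V2 \<subseteq> V"
  shows "restr V2 (\<lambda>w. \<Sum>v\<in>V. of_nat (k v) * Edual V Adj e v w)
       = dual_comb V Adj e V2 (\<lambda>w. \<Sum>v\<in>V. of_nat (k v) * coef V2 v w)"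
proof
  fix b
  show "restr V2 (\<lambda>w. \<Sum>v\<in>V. of_nat (k v) * Edual V Adj e v w) b
       = dual_comb V Adj e V2 (\<lambda>w. \<Sum>v\<in>V. of_nat (k v) * coef V2 v w) b"
  proof (cases "b \<in> V2")
    case True
    have "(\<Sum>v\<in>V. of_nat (k v) * dualS V v b) = (\<Sum>v\<in>V. of_nat (k v) * (\<Sum>w\<in>V2. coef V2 v w * dualS V w b))"
      using restr_dual[OF V2 _ True] by (intro sum.cong refl) simp
    also have "\<dots> = (\<Sum>w\<in>V2. (\<Sum>v\<in>V. of_nat (k v) * coef V2 v w) * dualS V w b)"
      unfolding sum_distrib_left sum_distrib_right
      by (subst sum.swap) (simp add: mult_ac)
    finally show ?thesis using True by (simp add: dual_comb_def restr_def Edual_eq)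
  next
    case False then show ?thesis by (simp add: dual_comb_def restr_def)
  qed
qed

lemma dual_comb_cong:
  "\<forall>v\<in>V2. r v = r' v \<Longrightarrow> dual_comb V Adj e V2 r = dual_comb V Adj e V2 r'"
  unfolding dual_comb_def by (intro arg_cong[where f="restr V2"] ext sum.cong) auto

end

context bnd begin

definition crd :: "('v \<Rightarrow> nat) \<Rightarrow> 'v \<Rightarrow> rat" where
  "crd k w = (\<Sum>v\<in>V. of_nat (k v) * coef V2 v w)"

lemma sum_split: "(\<Sum>v\<in>V. h v) = (\<Sum>v\<in>V1u. h v) + (\<Sum>v\<in>V - V1u. h v)"
  using V1_sub finV by (metis sum.subset_diff add.commute)

lemma crd_u: "crd k u = (\<Sum>v\<in>V1u. of_nat (k v) * coef V2 v u)"
proof -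
  have "(\<Sum>v\<in>V - V1u. of_nat (k v) * coef V2 v u) = 0"
    using coef_u_out by (intro sum.neutral) auto
  then show ?thesis unfolding crd_def sum_split[of "\<lambda>v. of_nat (k v) * coef V2 v u"] by simp
qed

lemma crd_w: "w \<in> V2 \<Longrightarrow> w \<noteq> u \<Longrightarrow> crd k w = (\<Sum>v\<in>V - V1u. of_nat (k v) * coef V2 v w)"
proof -
  assume w: "w \<in> V2" "w \<noteq> u"
  have "(\<Sum>v\<in>V1u. of_nat (k v) * coef V2 v w) = 0"
    using coef_in_other w by (intro sum.neutral) auto
  then show ?thesis unfolding crd_def sum_split[of "\<lambda>v. of_nat (k v) * coef V2 v w"] by simp
qed

lemma exps_iff:
  "k \<in> exps V Adj e V2 (dual_comb V Adj e V2 r) \<longleftrightarrow>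
     (\<forall>w. w \<notin> V \<longrightarrow> k w = 0) \<and> (\<forall>w\<in>V2. crd k w = r w)"
proof -
  have eq: "restr V2 (\<lambda>w. \<Sum>v\<in>V. of_nat (k v) * Edual V Adj e v w) = dual_comb V Adj e V2 (crd k)"
    unfolding crd_def by (rule restr_coords[OF V2])
  show ?thesis
  proof
    assume k: "k \<in> exps V Adj e V2 (dual_comb V Adj e V2 r)"
    then have "dual_comb V Adj e V2 (crd k) = dual_comb V Adj e V2 r" using eq by (simp add: exps_def)
    then show "(\<forall>w. w \<notin> V \<longrightarrow> k w = 0) \<and> (\<forall>w\<in>V2. crd k w = r w)"
      using dual_comb_unique[OF V2] k by (simp add: exps_def)
  next
    assume k: "(\<forall>w. w \<notin> V \<longrightarrow> k w = 0) \<and> (\<forall>w\<in>V2. crd k w = r w)"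
    then have "dual_comb V Adj e V2 (crd k) = dual_comb V Adj e V2 r" by (intro dual_comb_cong) auto
    then show "k \<in> exps V Adj e V2 (dual_comb V Adj e V2 r)" using eq k by (simp add: exps_def)
  qed
qed

definition fco :: "'v \<Rightarrow> nat \<Rightarrow> rat" where
  "fco v j = (-1) ^ j * ((of_int (int (valency V Adj v) - 2)) gchoose j)"

definition E1 :: "('v \<Rightarrow> rat) \<Rightarrow> ('v \<Rightarrow> nat) set" where
  "E1 r = {\<kappa>. (\<forall>w. w \<notin> V1u \<longrightarrow> \<kappa> w = 0) \<and> (\<Sum>v\<in>V1u. of_nat (\<kappa> v) * coef V2 v u) = r u}"

definition E2 :: "('v \<Rightarrow> rat) \<Rightarrow> ('v \<Rightarrow> nat) set" where
  "E2 r = {\<rho>. (\<forall>w. w \<notin> V - V1u \<longrightarrow> \<rho> w = 0) \<and>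
      (\<forall>w\<in>V2 - {u}. (\<Sum>v\<in>V - V1u. of_nat (\<rho> v) * coef V2 v w) = r w)}"

lemma Zsplit:
  "Zred_coeff V Adj e V2 (dual_comb V Adj e V2 r)
     = (\<Sum>\<kappa>\<in>E1 r. \<Prod>v\<in>V1u. fco v (\<kappa> v)) * (\<Sum>\<rho>\<in>E2 r. \<Prod>v\<in>V - V1u. fco v (\<rho> v))"
proof -
  let ?E = "exps V Adj e V2 (dual_comb V Adj e V2 r)"
  define sp where "sp k = ((\<lambda>v. if v \<in> V1u then k v else 0), (\<lambda>v. if v \<in> V - V1u then k v else 0))"
    for k :: "'v \<Rightarrow> nat"
  have "(\<Sum>p\<in>E1 r \<times> E2 r. (case p of (\<kappa>, \<rho>) \<Rightarrow> (\<Prod>v\<in>V1u. fco v (\<kappa> v)) * (\<Prod>v\<in>V - V1u. fco v (\<rho> v))))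
      = (\<Sum>k\<in>?E. \<Prod>v\<in>V. fco v (k v))"
  proof (rule sum.reindex_bij_witness[where i = sp and j = "\<lambda>(\<kappa>,\<rho>) v. \<kappa> v + \<rho> v"])
    fix p assume p: "p \<in> E1 r \<times> E2 r"
    obtain \<kappa> \<rho> where pe: "p = (\<kappa>, \<rho>)" by (cases p)
    have k1: "\<forall>w. w \<notin> V1u \<longrightarrow> \<kappa> w = 0" "(\<Sum>v\<in>V1u. of_nat (\<kappa> v) * coef V2 v u) = r u"
      using p pe by (auto simp: E1_def)
    have r2: "\<forall>w. w \<notin> V - V1u \<longrightarrow> \<rho> w = 0"
      "\<forall>w\<in>V2 - {u}. (\<Sum>v\<in>V - V1u. of_nat (\<rho> v) * coef V2 v w) = r w"
      using p pe by (auto simp: E2_def)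
    show "sp ((\<lambda>(\<kappa>,\<rho>) v. \<kappa> v + \<rho> v) p) = p"
      using k1 r2 pe by (auto simp: sp_def fun_eq_iff)
    let ?k = "\<lambda>v. \<kappa> v + \<rho> v"
    have kV1: "\<forall>v\<in>V1u. ?k v = \<kappa> v" using r2 by auto
    have kV2: "\<forall>v\<in>V - V1u. ?k v = \<rho> v" using k1 by auto
    have "(\<forall>w. w \<notin> V \<longrightarrow> ?k w = 0) \<and> (\<forall>w\<in>V2. crd ?k w = r w)"
    proof (intro conjI allI impI ballI)
      fix w assume "w \<notin> V" then show "?k w = 0" using k1 r2 V1_sub by auto
    next
      fix w assume w: "w \<in> V2"
      show "crd ?k w = r w"
      proof (cases "w = u")
        case True
        have "crd ?k w = (\<Sum>v\<in>V1u. of_nat (\<kappa> v) * coef V2 v u)"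
          unfolding True crd_u using kV1 by (intro sum.cong refl) auto
        then show ?thesis using k1 True by simp
      next
        case False
        have "crd ?k w = (\<Sum>v\<in>V - V1u. of_nat (\<rho> v) * coef V2 v w)"
          unfolding crd_w[OF w False] using kV2 by (intro sum.cong refl) auto
        then show ?thesis using r2 w False by simp
      qed
    qed
    then show "(\<lambda>(\<kappa>,\<rho>) v. \<kappa> v + \<rho> v) p \<in> ?E" using pe by (simp add: exps_iff)
    have "(\<Prod>v\<in>V. fco v (?k v)) = (\<Prod>v\<in>V1u. fco v (?k v)) * (\<Prod>v\<in>V - V1u. fco v (?k v))"
      using V1_sub finV by (metis prod.subset_diff mult.commute)
    also have "\<dots> = (\<Prod>v\<in>V1u. fco v (\<kappa> v)) * (\<Prod>v\<in>V - V1u. fco v (\<rho> v))"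
      using kV1 kV2 by simp
    finally show "(\<Prod>v\<in>V. fco v (((\<lambda>(\<kappa>,\<rho>) v. \<kappa> v + \<rho> v) p) v)) =
        (case p of (\<kappa>, \<rho>) \<Rightarrow> (\<Prod>v\<in>V1u. fco v (\<kappa> v)) * (\<Prod>v\<in>V - V1u. fco v (\<rho> v)))"
      using pe by simp
  next
    fix k assume k: "k \<in> ?E"
    then have kk: "\<forall>w. w \<notin> V \<longrightarrow> k w = 0" "\<forall>w\<in>V2. crd k w = r w" by (auto simp: exps_iff)
    show "(\<lambda>(\<kappa>,\<rho>) v. \<kappa> v + \<rho> v) (sp k) = k"
      using kk V1_sub by (auto simp: sp_def fun_eq_iff)
    have "fst (sp k) \<in> E1 r"
    proof -
      have "(\<Sum>v\<in>V1u. of_nat (fst (sp k) v) * coef V2 v u) = crd k u"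
        unfolding crd_u by (intro sum.cong refl) (simp add: sp_def)
      then show ?thesis using kk uV2 by (simp add: E1_def sp_def)
    qed
    moreover have "snd (sp k) \<in> E2 r"
    proof -
      have "\<forall>w\<in>V2 - {u}. (\<Sum>v\<in>V - V1u. of_nat (snd (sp k) v) * coef V2 v w) = r w"
      proof
        fix w assume w: "w \<in> V2 - {u}"
        have "(\<Sum>v\<in>V - V1u. of_nat (snd (sp k) v) * coef V2 v w) = crd k w"
          using w by (subst crd_w) (auto simp: sp_def intro!: sum.cong)
        then show "(\<Sum>v\<in>V - V1u. of_nat (snd (sp k) v) * coef V2 v w) = r w" using kk w by simp
      qed
      then show ?thesis by (simp add: E2_def sp_def)
    qed
    ultimately show "sp k \<in> E1 r \<times> E2 r" by (simp add: mem_Times_iff)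
  qed
  moreover have "(\<Sum>p\<in>E1 r \<times> E2 r. (case p of (\<kappa>, \<rho>) \<Rightarrow> (\<Prod>v\<in>V1u. fco v (\<kappa> v)) * (\<Prod>v\<in>V - V1u. fco v (\<rho> v))))
      = (\<Sum>\<kappa>\<in>E1 r. \<Prod>v\<in>V1u. fco v (\<kappa> v)) * (\<Sum>\<rho>\<in>E2 r. \<Prod>v\<in>V - V1u. fco v (\<rho> v))"
  proof -
    have "(\<Sum>p\<in>E1 r \<times> E2 r. (case p of (\<kappa>, \<rho>) \<Rightarrow> (\<Prod>v\<in>V1u. fco v (\<kappa> v)) * (\<Prod>v\<in>V - V1u. fco v (\<rho> v))))
      = (\<Sum>\<kappa>\<in>E1 r. \<Sum>\<rho>\<in>E2 r. (\<Prod>v\<in>V1u. fco v (\<kappa> v)) * (\<Prod>v\<in>V - V1u. fco v (\<rho> v)))"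
      by (simp only: sum.cartesian_product)
    also have "\<dots> = (\<Sum>\<kappa>\<in>E1 r. (\<Prod>v\<in>V1u. fco v (\<kappa> v)) * (\<Sum>\<rho>\<in>E2 r. \<Prod>v\<in>V - V1u. fco v (\<rho> v)))"
      by (simp only: sum_distrib_left)
    also have "\<dots> = (\<Sum>\<kappa>\<in>E1 r. \<Prod>v\<in>V1u. fco v (\<kappa> v)) * (\<Sum>\<rho>\<in>E2 r. \<Prod>v\<in>V - V1u. fco v (\<rho> v))"
      by (simp only: sum_distrib_right)
    finally show ?thesis .
  qed
  moreover have "Zred_coeff V Adj e V2 (dual_comb V Adj e V2 r) = (\<Sum>k\<in>?E. \<Prod>v\<in>V. fco v (k v))"
    by (simp add: Zred_coeff_def Zcoeff_factor_def fco_def)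
  ultimately show ?thesis by simp
qed

end


context bnd begin

lemma partB:
  assumes supp: "dual_comb V Adj e V2 r \<in> Zred_support V Adj e V2"
  shows "r u * Edual V Adj e u u \<le> (\<Sum>v\<in>V1u. (of_int (int (valency V Adj v)) - 2) * Edual V Adj e v u)"
proof (rule ccontr)
  assume neg: "\<not> ?thesis"
  have S1: "(\<Sum>\<kappa>\<in>E1 r. \<Prod>v\<in>V1u. fco v (\<kappa> v)) \<noteq> 0"
    using supp Zsplit[of r] by (auto simp: Zred_support_def)
  have "E1 r \<noteq> {}"
  proof
    assume "E1 r = {}"
    then show False using S1 by simp
  qed
  then obtain \<kappa>0 where k0: "\<kappa>0 \<in> E1 r" by blast
  obtain N :: nat where N: "N > 0" "\<forall>v\<in>V. \<exists>z::int. of_nat N * x v = of_int z"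
    using common_denom[OF finV, of x] by blast
  define g where "g v = nat (SOME z::int. of_nat N * x v = of_int z)" for v
  have gdef: "\<forall>v\<in>V. of_nat (g v) = of_nat N * x v"
  proof
    fix v assume v: "v \<in> V"
    define z where "z = (SOME z::int. of_nat N * x v = of_int z)"
    have ex: "\<exists>z::int. of_nat N * x v = of_int z" using N v by blast
    have z: "of_nat N * x v = of_int z" unfolding z_def by (rule someI_ex[OF ex])
    have "x v > 0" using dual_pos[OF uV v] .
    then have "of_nat N * x v > 0" using N by simp
    then have "of_int z > (0::rat)" using z by simp
    then have zp: "z > 0" by simp
    have "g v = nat z" by (simp add: g_def z_def)
    then show "of_nat (g v) = of_nat N * x v" using z zp by simp
  qed
  have gpos: "\<forall>v\<in>V1u. g v > 0"
  proof
    fix v assume "v \<in> V1u"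
    then have v: "v \<in> V" using V1_sub by auto
    have "(of_nat (g v) :: rat) > 0" using gdef v dual_pos[OF uV v] N by simp
    then show "g v > 0" by simp
  qed
  have xu: "x u > 0" using dual_pos[OF uV uV] .
  define s where "s \<kappa> = (\<Sum>v\<in>V1u. of_nat (\<kappa> v) * x v)" for \<kappa> :: "'v \<Rightarrow> nat"
  have sc: "(\<Sum>v\<in>V1u. of_nat (\<kappa> v) * coef V2 v u) = s \<kappa> / x u" for \<kappa>
    unfolding s_def sum_divide_distrib using coef_in_u by (intro sum.cong refl) auto
  have sg: "of_nat (\<Sum>v\<in>V1u. \<kappa> v * g v) = of_nat N * s \<kappa>" for \<kappa>
    unfolding s_def of_nat_sum sum_distrib_left using gdef V1_sub
    by (intro sum.cong refl) (auto simp: mult_ac)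
  define Q where "Q = (\<Sum>v\<in>V1u. \<kappa>0 v * g v)"
  have sk0: "s \<kappa>0 = r u * x u" using k0 sc[of \<kappa>0] xu by (simp add: E1_def field_simps)
  have Qr: "(of_nat Q :: rat) = of_nat N * (r u * x u)" using sg[of \<kappa>0] sk0 by (simp add: Q_def)
  have E1K: "E1 r = Ks V1u g Q"
  proof (rule Set.set_eqI)
    fix \<kappa>
    have "(s \<kappa> / x u = r u) \<longleftrightarrow> (s \<kappa> = r u * x u)" using xu by (auto simp: field_simps)
    also have "\<dots> \<longleftrightarrow> of_nat N * s \<kappa> = of_nat N * (r u * x u)" using N by simp
    also have "\<dots> \<longleftrightarrow> (of_nat (\<Sum>v\<in>V1u. \<kappa> v * g v) :: rat) = of_nat Q" using sg Qr by simp
    also have "\<dots> \<longleftrightarrow> (\<Sum>v\<in>V1u. \<kappa> v * g v) = Q" by (simp only: of_nat_eq_iff)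
    finally show "\<kappa> \<in> E1 r \<longleftrightarrow> \<kappa> \<in> Ks V1u g Q" by (simp add: E1_def Ks_def sc)
  qed
  define n where "n v = int (valency V Adj v) - 2" for v
  have Ed: "Edual V Adj e v u = x v" if "v \<in> V1u" for v
    using that V1_sub dualS_sym[OF subset_refl _ uV] by (auto simp: Edual_eq)
  have "(\<Sum>v\<in>V1u. (of_int (int (valency V Adj v)) - 2) * x v) < r u * x u"
    using neg Ed[OF uV1] Ed by simp
  then have "of_nat N * (\<Sum>v\<in>V1u. (of_int (int (valency V Adj v)) - 2) * x v) < of_nat N * (r u * x u)"
    using N by simp
  also have "of_nat N * (\<Sum>v\<in>V1u. (of_int (int (valency V Adj v)) - 2) * x v)
      = of_int (\<Sum>v\<in>V1u. n v * int (g v))"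
  proof -
    have elt: "of_nat N * ((of_int (int (valency V Adj v)) - 2) * x v) = of_int (n v * int (g v))"
      if "v \<in> V1u" for v
    proof -
      have gv: "of_nat (g v) = of_nat N * x v" using gdef V1_sub that by auto
      have "(of_int (n v * int (g v)) :: rat) = (of_int (int (valency V Adj v)) - 2) * of_nat (g v)"
        by (simp add: n_def)
      also have "\<dots> = of_nat N * ((of_int (int (valency V Adj v)) - 2) * x v)"
        unfolding gv by (simp only: mult_ac)
      finally show ?thesis by simp
    qed
    show ?thesis unfolding sum_distrib_left of_int_sum by (rule sum.cong[OF refl elt])
  qed
  finally have "(of_int (\<Sum>v\<in>V1u. n v * int (g v)) :: rat) < of_nat Q" using Qr by simp
  then have "(of_int (\<Sum>v\<in>V1u. n v * int (g v)) :: rat) < of_int (int Q)" by simp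
  then have Qgt: "(\<Sum>v\<in>V1u. n v * int (g v)) < int Q" by (simp only: of_int_less_iff)
  have Z: "\<forall>\<zeta>::complex. 0 \<le> (\<Sum>v\<in>{v\<in>V1u. \<zeta> ^ g v = 1}. n v)"
    using zeta_sum[OF gdef] unfolding n_def by blast
  have "(\<Sum>\<kappa>\<in>Ks V1u g Q. \<Prod>v\<in>V1u. Gc (n v) (\<kappa> v)) = 0"
    by (rule poly_bound[OF fin_V1 gpos Z Qgt])
  moreover have "(of_rat (\<Sum>\<kappa>\<in>Ks V1u g Q. \<Prod>v\<in>V1u. fco v (\<kappa> v)) :: complex)
      = (\<Sum>\<kappa>\<in>Ks V1u g Q. \<Prod>v\<in>V1u. Gc (n v) (\<kappa> v))"
    by (simp add: of_rat_sum of_rat_prod of_rat_mult of_rat_power of_rat_gchoose fco_def Gc_def n_def of_rat_diff)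
  ultimately have "(\<Sum>\<kappa>\<in>Ks V1u g Q. \<Prod>v\<in>V1u. fco v (\<kappa> v)) = 0" by simp
  with S1 E1K show False by simp
qed

end

theorem lemma4p1:
  fixes V V2 :: "'v set" and Adj :: "'v \<Rightarrow> 'v \<Rightarrow> bool" and e :: "'v \<Rightarrow> int"
  assumes tree: "is_tree V Adj"
    and negdef: "neg_definite V Adj e"
    and sub: "V2 \<subseteq> V"
    and conn2: "is_connected V2 Adj"
  shows "(\<forall>m\<in>Zred_support V Adj e V2.
            \<exists>r. (\<forall>v\<in>V2. r v \<ge> 0) \<and> m = dual_comb V Adj e V2 r \<and>
                (\<forall>r'. (\<forall>v\<in>V2. r' v \<ge> 0) \<and> m = dual_comb V Adj e V2 r' \<longrightarrow> (\<forall>v\<in>V2. r' v = r v)))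
       \<and> (\<forall>u\<in>boundary V Adj V2. \<forall>r.
            card {w \<in> V2. Adj u w} \<ge> 2 \<longrightarrow>
            (\<forall>v\<in>V2. r v \<ge> 0) \<longrightarrow>
            dual_comb V Adj e V2 r \<in> Zred_support V Adj e V2 \<longrightarrow>
            r u * Edual V Adj e u u
              \<le> (\<Sum>v\<in>V1 V Adj V2 u. (of_int (int (valency V Adj v)) - 2) * Edual V Adj e v u))"
proof -
  interpret plumb V Adj e using tree negdef by unfold_locales
  show ?thesis
  proof (intro conjI ballI allI impI)
    fix m assume "m \<in> Zred_support V Adj e V2"
    then show "\<exists>r. (\<forall>v\<in>V2. r v \<ge> 0) \<and> m = dual_comb V Adj e V2 r \<and>
                (\<forall>r'. (\<forall>v\<in>V2. r' v \<ge> 0) \<and> m = dual_comb V Adj e V2 r' \<longrightarrow> (\<forall>v\<in>V2. r' v = r v))"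
      by (rule partA[OF sub])
  next
    fix u r
    assume u: "u \<in> boundary V Adj V2" and d: "2 \<le> card {w \<in> V2. Adj u w}"
      and s: "dual_comb V Adj e V2 r \<in> Zred_support V Adj e V2"
    interpret bnd V Adj e V2 u using sub conn2 u d by unfold_locales
    show "r u * Edual V Adj e u u \<le> (\<Sum>v\<in>V1 V Adj V2 u. (of_int (int (valency V Adj v)) - 2) * Edual V Adj e v u)"
      by (rule partB[OF s])
  qed
qed

end
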